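(* For a time step $\Delta t>0$, the matrix $$\mathbf{P}=\begin{bmatrix}D_V''&-\frac{\Delta t}{2\hbar}H\\-\frac{\Delta t}{2\hbar}H&D_V''\end{bmatrix}$$ is positive definite if and only if $$\Delta t<\Delta t_{\mathrm{CFL,gen}}=\frac{2}{\rho\!\left(\frac{1}{\hbar}(D_V'')^{-1/2}H(D_V'')^{-1/2}\right)},$$ where $\rho(\cdot)$ is the spectral radius.
   Context: Fix constants $\hbar>0$, $m>0$, cell sizes $\Delta x,\Delta y,\Delta z>0$ and positive integers $n_x,n_y,n_z$. The region is a box of $n_x\times n_y\times n_z$ primary cells of size $\Delta x\times\Delta y\times\Delta z$ with primary nodes $(i,j,k)$, $1\le i\le n_x+1$, $1\le j\le n_y+1$, $1\le k\le n_z+1$. Let $N=(n_x+1)(n_y+1)(n_z+1)$; node-indexed vectors use the ordering $i+(j-1)(n_x+1)+(k-1)(n_x+1)(n_y+1)$. Real potential values $U_{i,j,k}$ are given at the nodes; $D_U$ is the $N\times N$ diagonal matrix containing them. Let $I_p$ be the $p\times p$ identity, $\tilde I_p=\mathrm{diag}(\tfrac12,1,\dots,1,\tfrac12)$ ($p\times p$), $W_p=[0_{p\times1}\ I_p]-[I_p\ 0_{p\times 1}]$ ($p\times(p+1)$), $\otimes$ the Kronecker product. Define $D_V''=\Delta x\Delta y\Delta z\,\tilde I_{n_z+1}\otimes\tilde I_{n_y+1}\otimes\tilde I_{n_x+1}$; $D=[D_x\ D_y\ D_z]$ with $D_x=-I_{n_z+1}\otimes I_{n_y+1}\otimes W_{n_x}^T$,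 $D_y=-I_{n_z+1}\otimes W_{n_y}^T\otimes I_{n_x+1}$, $D_z=-W_{n_z}^T\otimes I_{n_y+1}\otimes I_{n_x+1}$; $D_S''=\mathrm{diag}(\Delta y\Delta z\,\tilde I_{n_z+1}\otimes\tilde I_{n_y+1}\otimes I_{n_x},\ \Delta x\Delta z\,\tilde I_{n_z+1}\otimes I_{n_y}\otimes\tilde I_{n_x+1},\ \Delta x\Delta y\,I_{n_z}\otimes\tilde I_{n_y+1}\otimes\tilde I_{n_x+1})$; $D_l'=\mathrm{diag}(\Delta x\, I_{n_x(n_y+1)(n_z+1)},\ \Delta y\, I_{(n_x+1)n_y(n_z+1)},\ \Delta z\, I_{(n_x+1)(n_y+1)n_z})$; $H=\frac{\hbar^2}{2m}D D_S''(D_l')^{-1}D^T+D_V''D_U$. *)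

theory Defs
  imports "Jordan_Normal_Form.Spectral_Radius"
begin

(* All matrices are Jordan_Normal_Form matrices ('a mat), indexed from 0.
   Node (i,j,k) (1-based, as in the paper) has 0-based vector index
   (i-1) + (j-1)(nx+1) + (k-1)(nx+1)(ny+1). *)

definition kron :: "real mat \<Rightarrow> real mat \<Rightarrow> real mat" where
  "kron A B = mat (dim_row A * dim_row B) (dim_col A * dim_col B)
     (\<lambda>(i,j). A $$ (i div dim_row B, j div dim_col B) * B $$ (i mod dim_row B, j mod dim_col B))"

definition hcat :: "real mat \<Rightarrow> real mat \<Rightarrow> real mat" where
  "hcat A B = mat (dim_row A) (dim_col A + dim_col B)
     (\<lambda>(i,j). if j < dim_col A then A $$ (i,j) else B $$ (i, j - dim_col A))"

definition Itilde :: "nat \<Rightarrow> real mat" where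
  "Itilde p = mat p p (\<lambda>(i,j). if i = j then (if i = 0 \<or> i = p - 1 then 1/2 else 1) else 0)"

definition Wm :: "nat \<Rightarrow> real mat" where
  "Wm p = mat p (p+1) (\<lambda>(i,j). (if j = i + 1 then 1 else 0) - (if j = i then 1 else 0))"

definition DV :: "real \<Rightarrow> real \<Rightarrow> real \<Rightarrow> nat \<Rightarrow> nat \<Rightarrow> nat \<Rightarrow> real mat" where
  "DV dx dy dz nx ny nz = (dx*dy*dz) \<cdot>\<^sub>m kron (Itilde (nz+1)) (kron (Itilde (ny+1)) (Itilde (nx+1)))"

definition Dx :: "nat \<Rightarrow> nat \<Rightarrow> nat \<Rightarrow> real mat" where
  "Dx nx ny nz = - kron (1\<^sub>m (nz+1)) (kron (1\<^sub>m (ny+1)) ((Wm nx)\<^sup>T))"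
definition Dy :: "nat \<Rightarrow> nat \<Rightarrow> nat \<Rightarrow> real mat" where
  "Dy nx ny nz = - kron (1\<^sub>m (nz+1)) (kron ((Wm ny)\<^sup>T) (1\<^sub>m (nx+1)))"
definition Dz :: "nat \<Rightarrow> nat \<Rightarrow> nat \<Rightarrow> real mat" where
  "Dz nx ny nz = - kron ((Wm nz)\<^sup>T) (kron (1\<^sub>m (ny+1)) (1\<^sub>m (nx+1)))"

definition Dmat :: "nat \<Rightarrow> nat \<Rightarrow> nat \<Rightarrow> real mat" where
  "Dmat nx ny nz = hcat (Dx nx ny nz) (hcat (Dy nx ny nz) (Dz nx ny nz))"

definition DS :: "real \<Rightarrow> real \<Rightarrow> real \<Rightarrow> nat \<Rightarrow> nat \<Rightarrow> nat \<Rightarrow> real mat" where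
  "DS dx dy dz nx ny nz = diag_block_mat
     [(dy*dz) \<cdot>\<^sub>m kron (Itilde (nz+1)) (kron (Itilde (ny+1)) (1\<^sub>m nx)),
      (dx*dz) \<cdot>\<^sub>m kron (Itilde (nz+1)) (kron (1\<^sub>m ny) (Itilde (nx+1))),
      (dx*dy) \<cdot>\<^sub>m kron (1\<^sub>m nz) (kron (Itilde (ny+1)) (Itilde (nx+1)))]"

definition Dl :: "real \<Rightarrow> real \<Rightarrow> real \<Rightarrow> nat \<Rightarrow> nat \<Rightarrow> nat \<Rightarrow> real mat" where
  "Dl dx dy dz nx ny nz = diag_block_mat
     [dx \<cdot>\<^sub>m 1\<^sub>m (nx*(ny+1)*(nz+1)), dy \<cdot>\<^sub>m 1\<^sub>m ((nx+1)*ny*(nz+1)), dz \<cdot>\<^sub>m 1\<^sub>m ((nx+1)*(ny+1)*nz)]"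

definition mat_inv :: "real mat \<Rightarrow> real mat" where
  "mat_inv A = (THE B. B \<in> carrier_mat (dim_row A) (dim_row A) \<and> inverts_mat A B \<and> inverts_mat B A)"

definition DU :: "(nat \<Rightarrow> nat \<Rightarrow> nat \<Rightarrow> real) \<Rightarrow> nat \<Rightarrow> nat \<Rightarrow> nat \<Rightarrow> real mat" where
  "DU U nx ny nz = mat ((nx+1)*(ny+1)*(nz+1)) ((nx+1)*(ny+1)*(nz+1))
     (\<lambda>(l,l'). if l = l' then U (l mod (nx+1) + 1) ((l div (nx+1)) mod (ny+1) + 1) (l div ((nx+1)*(ny+1)) + 1) else 0)"

definition Hmat :: "real \<Rightarrow> real \<Rightarrow> real \<Rightarrow> real \<Rightarrow> real \<Rightarrow> nat \<Rightarrow> nat \<Rightarrow> nat \<Rightarrow> (nat \<Rightarrow> nat \<Rightarrow> nat \<Rightarrow> real) \<Rightarrow> real mat" where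
  "Hmat hbar m dx dy dz nx ny nz U =
     (hbar^2 / (2*m)) \<cdot>\<^sub>m (Dmat nx ny nz * DS dx dy dz nx ny nz * mat_inv (Dl dx dy dz nx ny nz) * (Dmat nx ny nz)\<^sup>T)
     + DV dx dy dz nx ny nz * DU U nx ny nz"

definition diag_inv_sqrt :: "real mat \<Rightarrow> real mat" where
  "diag_inv_sqrt A = mat (dim_row A) (dim_col A) (\<lambda>(i,j). if i = j then 1 / sqrt (A $$ (i,i)) else 0)"

definition pos_def :: "real mat \<Rightarrow> bool" where
  "pos_def A \<longleftrightarrow> A \<in> carrier_mat (dim_row A) (dim_row A) \<and> A\<^sup>T = A \<and>
     (\<forall>v \<in> carrier_vec (dim_row A). v \<noteq> 0\<^sub>v (dim_row A) \<longrightarrow> v \<bullet> (A *\<^sub>v v) > 0)"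

definition Pmat :: "real \<Rightarrow> real \<Rightarrow> real \<Rightarrow> real \<Rightarrow> real \<Rightarrow> real \<Rightarrow> nat \<Rightarrow> nat \<Rightarrow> nat \<Rightarrow> (nat \<Rightarrow> nat \<Rightarrow> nat \<Rightarrow> real) \<Rightarrow> real mat" where
  "Pmat dt hbar m dx dy dz nx ny nz U =
     (let H = Hmat hbar m dx dy dz nx ny nz U; V = DV dx dy dz nx ny nz;
          B = (- (dt / (2*hbar))) \<cdot>\<^sub>m H
      in four_block_mat V B B V)"

definition dt_CFL :: "real \<Rightarrow> real \<Rightarrow> real \<Rightarrow> real \<Rightarrow> real \<Rightarrow> nat \<Rightarrow> nat \<Rightarrow> nat \<Rightarrow> (nat \<Rightarrow> nat \<Rightarrow> nat \<Rightarrow> real) \<Rightarrow> real" where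
  "dt_CFL hbar m dx dy dz nx ny nz U =
     (let S = diag_inv_sqrt (DV dx dy dz nx ny nz);
          M = (1/hbar) \<cdot>\<^sub>m (S * Hmat hbar m dx dy dz nx ny nz U * S)
      in 2 / spectral_radius (map_mat complex_of_real M))"

end

theory Submission
  imports Defs
begin


definition qf :: "real mat \<Rightarrow> nat \<Rightarrow> (nat \<Rightarrow> real) \<Rightarrow> (nat \<Rightarrow> real) \<Rightarrow> real" where
  "qf A n x y = (\<Sum>i\<in>{0..<n}. \<Sum>j\<in>{0..<n}. x i * A $$ (i,j) * y j)"

definition sqs :: "nat \<Rightarrow> (nat \<Rightarrow> real) \<Rightarrow> real" where
  "sqs n x = (\<Sum>i\<in>{0..<n}. (x i)^2)"

lemma cs_sum:
  fixes x y :: "nat \<Rightarrow> real"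
  assumes "finite S"
  shows "(\<Sum>i\<in>S. x i * y i)^2 \<le> (\<Sum>i\<in>S. (x i)^2) * (\<Sum>i\<in>S. (y i)^2)"
proof (cases "(\<Sum>i\<in>S. (x i)^2) = 0")
  case True
  hence "\<forall>i\<in>S. x i = 0" using assms by (simp add: sum_nonneg_eq_0_iff)
  thus ?thesis by simp
next
  case False
  define s where "s = (\<Sum>i\<in>S. (x i)^2)"
  define p where "p = (\<Sum>i\<in>S. x i * y i)"
  define t where "t = (\<Sum>i\<in>S. (y i)^2)"
  have s: "s > 0" using False unfolding s_def by (simp add: sum_nonneg less_le)
  have "0 \<le> (\<Sum>i\<in>S. (y i - (p/s) * x i)^2)" by (simp add: sum_nonneg)
  also have "\<dots> = (\<Sum>i\<in>S. (y i)^2 - 2*(p/s) * (x i * y i) + (p/s)^2 * (x i)^2)"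
    by (rule sum.cong, auto simp: power2_eq_square algebra_simps)
  also have "\<dots> = t - 2*(p/s)*p + (p/s)^2 * s"
    unfolding s_def p_def t_def by (simp add: sum.distrib sum_subtractf sum_distrib_left)
  also have "\<dots> = t - p^2/s" using s by (simp add: power2_eq_square field_simps)
  finally have "p^2/s \<le> t" by simp
  hence "p^2 \<le> t * s" using s by (simp add: field_simps)
  thus ?thesis unfolding s_def p_def t_def by (simp add: mult.commute)
qed

lemma mult_entry:
  assumes "A \<in> carrier_mat n n" "B \<in> carrier_mat n n" "i < n" "j < n"
  shows "(A * B) $$ (i,j) = (\<Sum>k\<in>{0..<n}. A $$ (i,k) * B $$ (k,j))"
  using assms by (simp add: scalar_prod_def)

lemma pow_add_mat:
  fixes A :: "real mat"
  assumes A: "A \<in> carrier_mat n n"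
  shows "A ^\<^sub>m (a + b) = A ^\<^sub>m a * A ^\<^sub>m b"
proof (induct b)
  case 0
  then show ?case using A by simp
next
  case (Suc b)
  have "A ^\<^sub>m (a + Suc b) = (A ^\<^sub>m a * A ^\<^sub>m b) * A" using Suc by simp
  also have "\<dots> = A ^\<^sub>m a * (A ^\<^sub>m b * A)"
    by (rule assoc_mult_mat[of _ n n _ n], insert A, auto)
  finally show ?case by simp
qed

lemma pow_one_mat: "A \<in> carrier_mat n n \<Longrightarrow> A ^\<^sub>m 1 = A"
  by simp

lemma pow_sym:
  fixes A :: "real mat"
  assumes A: "A \<in> carrier_mat n n" and s: "transpose_mat A = A"
  shows "transpose_mat (A ^\<^sub>m k) = A ^\<^sub>m k"
proof (induct k)
  case 0
  then show ?case using A by simp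
next
  case (Suc k)
  have "transpose_mat (A ^\<^sub>m Suc k) = transpose_mat A * transpose_mat (A ^\<^sub>m k)"
    using transpose_mult[OF pow_carrier_mat[OF A, of k] A] by simp
  also have "\<dots> = A * A ^\<^sub>m k" using Suc s A by simp
  also have "\<dots> = A ^\<^sub>m (Suc k)"
  proof -
    have e1: "A ^\<^sub>m 1 = A" using A by simp
    have "A ^\<^sub>m (1 + k) = A ^\<^sub>m 1 * A ^\<^sub>m k" by (rule pow_add_mat[OF A])
    thus ?thesis by (simp only: e1 plus_1_eq_Suc)
  qed
  finally show ?case .
qed

lemma qf_square:
  assumes B: "B \<in> carrier_mat n n" and s: "\<And>i j. i < n \<Longrightarrow> j < n \<Longrightarrow> B $$ (i,j) = B $$ (j,i)"
  shows "qf (B * B) n x x = sqs n (\<lambda>k. \<Sum>j\<in>{0..<n}. B $$ (k,j) * x j)"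
proof -
  have "qf (B * B) n x x = (\<Sum>i\<in>{0..<n}. \<Sum>j\<in>{0..<n}. \<Sum>k\<in>{0..<n}. x i * B $$ (i,k) * B $$ (k,j) * x j)"
    unfolding qf_def
    by (intro sum.cong refl, simp add: mult_entry[OF B B] sum_distrib_left sum_distrib_right mult.assoc)
  also have "\<dots> = (\<Sum>k\<in>{0..<n}. \<Sum>i\<in>{0..<n}. \<Sum>j\<in>{0..<n}. x i * B $$ (i,k) * B $$ (k,j) * x j)"
    by (subst sum.swap, subst (2) sum.swap, rule refl)
  also have "\<dots> = (\<Sum>k\<in>{0..<n}. (\<Sum>i\<in>{0..<n}. B $$ (k,i) * x i) * (\<Sum>j\<in>{0..<n}. B $$ (k,j) * x j))"
    by (intro sum.cong refl, simp add: sum_distrib_left sum_distrib_right s ac_simps)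
  finally show ?thesis unfolding sqs_def by (simp add: power2_eq_square)
qed

lemma qf_lin:
  shows "qf B n x x = (\<Sum>k\<in>{0..<n}. x k * (\<Sum>j\<in>{0..<n}. B $$ (k,j) * x j))"
  unfolding qf_def by (simp add: sum_distrib_left mult.assoc)



lemma step_cs:
  fixes A :: "real mat"
  assumes A: "A \<in> carrier_mat n n" and s: "transpose_mat A = A"
  shows "(qf (A ^\<^sub>m m) n x x)^2 \<le> sqs n x * qf (A ^\<^sub>m (m + m)) n x x"
    "0 \<le> qf (A ^\<^sub>m (m + m)) n x x"
proof -
  define B where "B = A ^\<^sub>m m"
  have B: "B \<in> carrier_mat n n" unfolding B_def using A by simp
  have Bs: "transpose_mat B = B" unfolding B_def by (rule pow_sym[OF A s])
  have bs: "\<And>i j. i < n \<Longrightarrow> j < n \<Longrightarrow> B $$ (i,j) = B $$ (j,i)"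
  proof -
    fix i j assume "i < n" "j < n"
    hence "transpose_mat B $$ (j,i) = B $$ (i,j)" using B by simp
    thus "B $$ (i,j) = B $$ (j,i)" using Bs by simp
  qed
  define y where "y = (\<lambda>k. \<Sum>j\<in>{0..<n}. B $$ (k,j) * x j)"
  have e2: "qf (A ^\<^sub>m (m + m)) n x x = sqs n y"
    unfolding pow_add_mat[OF A] B_def[symmetric] y_def by (rule qf_square[OF B bs])
  have e1: "qf (A ^\<^sub>m m) n x x = (\<Sum>k\<in>{0..<n}. x k * y k)"
    unfolding B_def[symmetric] y_def by (rule qf_lin)
  show "(qf (A ^\<^sub>m m) n x x)^2 \<le> sqs n x * qf (A ^\<^sub>m (m + m)) n x x"
    unfolding e1 e2 sqs_def by (rule cs_sum, simp)
  show "0 \<le> qf (A ^\<^sub>m (m + m)) n x x" unfolding e2 sqs_def by (simp add: sum_nonneg)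
qed

lemma pow_claim:
  fixes A :: "real mat"
  assumes A: "A \<in> carrier_mat n n" and s: "transpose_mat A = A"
  shows "(qf A n x x)^(2^(Suc j)) \<le> (sqs n x)^(2^(Suc j) - 1) * qf (A ^\<^sub>m (2^(Suc j))) n x x"
proof (induct j)
  case 0
  have "A ^\<^sub>m 1 = A" using A by simp
  then show ?case using step_cs(1)[OF A s, of 1 x] by (simp add: numeral_2_eq_2)
next
  case (Suc j)
  define m where "m = (2::nat)^(Suc j)"
  define q where "q = qf A n x x"
  define S where "S = sqs n x"
  define t where "t = qf (A ^\<^sub>m m) n x x"
  define t2 where "t2 = qf (A ^\<^sub>m (m + m)) n x x"
  have S0: "S \<ge> 0" unfolding S_def sqs_def by (simp add: sum_nonneg)
  have m1: "m \<ge> 1" unfolding m_def by simp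
  have IH: "q ^ m \<le> S ^ (m - 1) * t" using Suc unfolding m_def q_def S_def t_def by simp
  have q0: "0 \<le> q ^ m" unfolding m_def by (simp add: zero_le_even_power)
  have cs: "t^2 \<le> S * t2" unfolding t_def S_def t2_def by (rule step_cs(1)[OF A s])
  have "q ^ (m + m) = (q ^ m)^2" by (simp add: power2_eq_square power_add)
  also have "\<dots> \<le> (S ^ (m - 1) * t)^2" using IH q0 by (simp add: power_mono)
  also have "\<dots> = S ^ (m - 1) * S ^ (m - 1) * t^2" by (simp add: power2_eq_square)
  also have "\<dots> \<le> S ^ (m - 1) * S ^ (m - 1) * (S * t2)"
    using cs S0 by (simp add: mult_left_mono)
  also have "\<dots> = S ^ ((m - 1) + (m - 1) + 1) * t2" by (simp add: power_add)
  also have "(m - 1) + (m - 1) + 1 = m + m - 1" using m1 by simp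
  finally have "q ^ (m + m) \<le> S ^ (m + m - 1) * t2" .
  moreover have "m + m = 2 ^ Suc (Suc j)" unfolding m_def by simp
  ultimately show ?case unfolding q_def S_def t2_def by simp
qed

lemma sr_nonneg:
  assumes "C \<in> carrier_mat n n" "n > 0"
  shows "spectral_radius C \<ge> 0"
  using spectral_radius_mem_max(1)[OF assms] by auto

lemma sr_scale:
  fixes M :: "real mat"
  assumes M: "M \<in> carrier_mat n n" and n: "n > 0" and r: "r > 0"
    and lt: "spectral_radius (map_mat complex_of_real M) < r"
  shows "spectral_radius (map_mat complex_of_real ((1/r) \<cdot>\<^sub>m M)) < 1"
proof -
  let ?C = "map_mat complex_of_real M"
  let ?A = "map_mat complex_of_real ((1/r) \<cdot>\<^sub>m M)"
  have C: "?C \<in> carrier_mat n n" and Ac: "?A \<in> carrier_mat n n" using M by auto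
  from spectral_radius_mem_max(1)[OF Ac n] obtain mu where
    mu: "mu \<in> spectrum ?A" and nmu: "spectral_radius ?A = norm mu" by auto
  from mu obtain v where ev: "eigenvector ?A v mu" unfolding spectrum_def eigenvalue_def by auto
  hence v: "v \<in> carrier_vec n" "v \<noteq> 0\<^sub>v n" "?A *\<^sub>v v = mu \<cdot>\<^sub>v v"
    unfolding eigenvector_def using Ac by auto
  have "?C *\<^sub>v v = (of_real r * mu) \<cdot>\<^sub>v v"
  proof (rule eq_vecI)
    fix i assume i: "i < dim_vec ((of_real r * mu) \<cdot>\<^sub>v v)"
    hence i: "i < n" using v by simp
    have h1: "(?A *\<^sub>v v) $ i = mu * v $ i" unfolding v(3) using v i by simp
    have h2: "(?A *\<^sub>v v) $ i = (\<Sum>j\<in>{0..<n}. complex_of_real (M $$ (i,j) / r) * v $ j)"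
      using i v(1) M by (simp add: scalar_prod_def)
    have e0: "(\<Sum>j\<in>{0..<n}. complex_of_real (M $$ (i,j) / r) * v $ j) = mu * v $ i"
      using h1 h2 by simp
    have e1: "of_real r * (\<Sum>j\<in>{0..<n}. complex_of_real (M $$ (i,j) / r) * v $ j)
       = (\<Sum>j\<in>{0..<n}. complex_of_real (M $$ (i,j)) * v $ j)"
      unfolding sum_distrib_left using r by (intro sum.cong refl, simp add: of_real_divide field_simps)
    have e2: "(\<Sum>j\<in>{0..<n}. complex_of_real (M $$ (i,j)) * v $ j) = of_real r * mu * v $ i"
      using e0 e1 by (metis mult.assoc)
    have e3: "(?C *\<^sub>v v) $ i = (\<Sum>j\<in>{0..<n}. complex_of_real (M $$ (i,j)) * v $ j)"
      using i v(1) M by (simp add: scalar_prod_def)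
    show "(?C *\<^sub>v v) $ i = ((of_real r * mu) \<cdot>\<^sub>v v) $ i"
      unfolding e3 e2 using i v(1) by simp
  qed (insert v M, auto)
  hence "eigenvector ?C v (of_real r * mu)" unfolding eigenvector_def using v C by auto
  hence "of_real r * mu \<in> spectrum ?C" unfolding spectrum_def eigenvalue_def by auto
  hence "norm (of_real r * mu) \<le> spectral_radius ?C"
    using spectral_radius_mem_max(2)[OF C n] by auto
  hence a: "r * norm mu \<le> spectral_radius ?C" using r by (simp add: norm_mult)
  have "norm mu < 1"
  proof (rule ccontr)
    assume "\<not> norm mu < 1"
    hence "r * 1 \<le> r * norm mu" using r by (intro mult_left_mono) auto
    thus False using a lt by simp
  qed
  thus ?thesis using nmu by simp
qed



lemma qf_abs_bound:
  assumes "\<And>i j. i < n \<Longrightarrow> j < n \<Longrightarrow> \<bar>B $$ (i,j)\<bar> \<le> K"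
  shows "\<bar>qf B n x x\<bar> \<le> K * (\<Sum>i\<in>{0..<n}. \<bar>x i\<bar>)^2"
proof -
  have "\<bar>qf B n x x\<bar> \<le> (\<Sum>i\<in>{0..<n}. \<bar>\<Sum>j\<in>{0..<n}. x i * B $$ (i,j) * x j\<bar>)"
    unfolding qf_def by (rule sum_abs)
  also have "\<dots> \<le> (\<Sum>i\<in>{0..<n}. \<Sum>j\<in>{0..<n}. \<bar>x i\<bar> * K * \<bar>x j\<bar>)"
  proof (rule sum_mono)
    fix i assume i: "i \<in> {0..<n}"
    have "\<bar>\<Sum>j\<in>{0..<n}. x i * B $$ (i,j) * x j\<bar> \<le> (\<Sum>j\<in>{0..<n}. \<bar>x i * B $$ (i,j) * x j\<bar>)"
      by (rule sum_abs)
    also have "\<dots> \<le> (\<Sum>j\<in>{0..<n}. \<bar>x i\<bar> * K * \<bar>x j\<bar>)"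
    proof (rule sum_mono)
      fix j assume j: "j \<in> {0..<n}"
      have "\<bar>B $$ (i,j)\<bar> \<le> K" using assms i j by auto
      hence "\<bar>x i\<bar> * \<bar>B $$ (i,j)\<bar> * \<bar>x j\<bar> \<le> \<bar>x i\<bar> * K * \<bar>x j\<bar>"
        by (intro mult_right_mono mult_left_mono) auto
      thus "\<bar>x i * B $$ (i,j) * x j\<bar> \<le> \<bar>x i\<bar> * K * \<bar>x j\<bar>" by (simp add: abs_mult)
    qed
    finally show "\<bar>\<Sum>j\<in>{0..<n}. x i * B $$ (i,j) * x j\<bar> \<le> (\<Sum>j\<in>{0..<n}. \<bar>x i\<bar> * K * \<bar>x j\<bar>)" .
  qed
  also have "\<dots> = K * (\<Sum>i\<in>{0..<n}. \<bar>x i\<bar>)^2"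
    by (simp add: power2_eq_square sum_distrib_left sum_distrib_right ac_simps)
  finally show ?thesis .
qed

lemma qf_smult: "qf (c \<cdot>\<^sub>m M) n x y = c * qf M n x y" if "M \<in> carrier_mat n n"
  unfolding qf_def sum_distrib_left using that by (intro sum.cong refl, auto simp: ac_simps)

lemma qf_bound:
  fixes M :: "real mat"
  assumes M: "M \<in> carrier_mat n n" and s: "transpose_mat M = M" and n: "n > 0"
  shows "\<bar>qf M n x x\<bar> \<le> spectral_radius (map_mat complex_of_real M) * sqs n x"
proof (rule ccontr)
  let ?C = "map_mat complex_of_real M"
  define rho where "rho = spectral_radius ?C"
  define q where "q = qf M n x x"
  define S where "S = sqs n x"
  assume "\<not> ?thesis"
  hence neg: "rho * S < \<bar>q\<bar>" unfolding rho_def q_def S_def by simp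
  have C: "?C \<in> carrier_mat n n" using M by simp
  have rho0: "rho \<ge> 0" unfolding rho_def by (rule sr_nonneg[OF C n])
  have S0: "S \<ge> 0" unfolding S_def sqs_def by (simp add: sum_nonneg)
  have Spos: "S > 0"
  proof (rule ccontr)
    assume "\<not> S > 0"
    hence "S = 0" using S0 by simp
    hence "\<forall>i\<in>{0..<n}. (x i)^2 = 0" unfolding S_def sqs_def
      by (subst sum_nonneg_eq_0_iff[symmetric]) auto
    hence "q = 0" unfolding q_def qf_def by simp
    thus False using neg \<open>S = 0\<close> by simp
  qed
  define r where "r = (rho + \<bar>q\<bar> / S) / 2"
  have rq: "rho < \<bar>q\<bar> / S" using neg Spos by (simp add: field_simps)
  have mid: "\<And>a b::real. a < b \<Longrightarrow> a < (a+b)/2 \<and> (a+b)/2 < b" by (auto simp: field_simps)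
  have r1: "rho < r" "r < \<bar>q\<bar> / S" using mid[OF rq] unfolding r_def by auto
  have r0: "r > 0" using r1 rho0 by simp
  define A where "A = (1/r) \<cdot>\<^sub>m M"
  have A: "A \<in> carrier_mat n n" unfolding A_def using M by simp
  have As: "transpose_mat A = A"
  proof (rule eq_matI)
    fix i j assume "i < dim_row A" "j < dim_col A"
    hence ij: "i < n" "j < n" using A by auto
    have "transpose_mat M $$ (j,i) = M $$ (i,j)" using ij M by simp
    hence "M $$ (j,i) = M $$ (i,j)" using s by simp
    thus "transpose_mat A $$ (i,j) = A $$ (i,j)" using ij M unfolding A_def by simp
  qed (insert A, auto)
  have srA: "spectral_radius (map_mat complex_of_real A) < 1"
    unfolding A_def by (rule sr_scale[OF M n r0], insert r1, simp add: rho_def)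
  have Ac: "map_mat complex_of_real A \<in> carrier_mat n n" using A by simp
  from spectral_radius_jnf_norm_bound_less_1_upper_triangular[OF Ac srA]
  obtain K where K: "\<And>k. norm_bound (map_mat complex_of_real A ^\<^sub>m k) K" by auto
  have Kb: "\<And>k i j. i < n \<Longrightarrow> j < n \<Longrightarrow> \<bar>(A ^\<^sub>m k) $$ (i,j)\<bar> \<le> K"
  proof -
    fix k i j assume i: "i < n" and j: "j < n"
    have "norm ((map_mat complex_of_real A ^\<^sub>m k) $$ (i,j)) \<le> K"
      using K[of k] i j A unfolding norm_bound_def by simp
    also have "map_mat complex_of_real A ^\<^sub>m k = map_mat complex_of_real (A ^\<^sub>m k)"
      by (rule of_real_hom.mat_hom_pow[OF A, symmetric])
    finally show "\<bar>(A ^\<^sub>m k) $$ (i,j)\<bar> \<le> K" using i j A by simp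
  qed
  define K' where "K' = K * (\<Sum>i\<in>{0..<n}. \<bar>x i\<bar>)^2"
  have tb: "\<And>k. qf (A ^\<^sub>m k) n x x \<le> K'"
    using qf_abs_bound[OF Kb] unfolding K'_def by (meson abs_le_D1)
  define qa where "qa = qf A n x x"
  have qa: "qa = q / r" unfolding qa_def q_def A_def qf_smult[OF M] by simp
  have qaS: "S < \<bar>qa\<bar>" unfolding qa using r1 r0 Spos by (simp add: field_simps)
  define z where "z = (qa / S)^2"
  have z0: "1 < \<bar>qa / S\<bar>" using qaS Spos by (simp add: abs_divide less_divide_eq)
  have z1: "z > 1" unfolding z_def using one_less_power[OF z0, of 2] by (simp only: power2_abs)
  have key: "\<And>j. z ^ (2^j) \<le> K' / S"
  proof -
    fix j :: nat
    have "qa ^ (2^(Suc j)) \<le> S ^ (2^(Suc j) - 1) * qf (A ^\<^sub>m (2^(Suc j))) n x x"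
      unfolding qa_def S_def by (rule pow_claim[OF A As])
    also have "\<dots> \<le> S ^ (2^(Suc j) - 1) * K'" using tb S0 by (simp add: mult_left_mono)
    finally have a: "qa ^ (2^(Suc j)) \<le> S ^ (2^(Suc j) - 1) * K'" .
    have b: "qa ^ (2^(Suc j)) = z ^ (2^j) * S ^ (2^(Suc j))"
      unfolding z_def using Spos by (simp add: power_mult[symmetric] power_divide mult.commute)
    have c: "S ^ (2^(Suc j)) = S ^ (2^(Suc j) - 1) * S"
      by (metis One_nat_def Suc_pred pos2 power_Suc2 zero_less_power)
    have "z ^ (2^j) * S ^ (2^(Suc j) - 1) * S \<le> S ^ (2^(Suc j) - 1) * K'"
      using a b c by (simp add: mult.assoc)
    hence "(z ^ (2^j) * S) * S ^ (2^(Suc j) - 1) \<le> K' * S ^ (2^(Suc j) - 1)"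
      by (simp add: ac_simps)
    hence "z ^ (2^j) * S \<le> K'" using Spos by (simp add: mult_le_cancel_right)
    thus "z ^ (2^j) \<le> K' / S" using Spos by (simp add: field_simps)
  qed
  obtain j :: nat where j: "K' / S / (z - 1) < real j" using reals_Archimedean2 by blast
  have "1 + real (2^j) * (z - 1) \<le> (1 + (z - 1)) ^ (2^j)"
    by (rule Bernoulli_inequality, insert z1, simp)
  hence "1 + real (2^j) * (z - 1) \<le> K' / S" using key[of j] by simp
  moreover have "real j * (z - 1) \<le> real (2^j) * (z - 1)"
    using z1 less_exp[of j] by (intro mult_right_mono) (simp_all add: less_imp_le)
  moreover have "K' / S < real j * (z - 1)" using j pos_divide_less_eq[of "z - 1" "K' / S" "real j"] z1 by simp
  ultimately show False by simp
qed



lemma eig_real: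
  fixes M :: "real mat"
  assumes M: "M \<in> carrier_mat n n" and s: "transpose_mat M = M" and n: "n > 0"
  shows "\<exists>u l. sqs n u > 0 \<and> \<bar>l\<bar> = spectral_radius (map_mat complex_of_real M) \<and>
     (\<forall>i<n. (\<Sum>j\<in>{0..<n}. M $$ (i,j) * u j) = l * u i)"
proof -
  let ?C = "map_mat complex_of_real M"
  have C: "?C \<in> carrier_mat n n" using M by simp
  have sy: "\<And>i j. i < n \<Longrightarrow> j < n \<Longrightarrow> M $$ (j,i) = M $$ (i,j)"
  proof -
    fix i j assume ij: "i < n" "j < n"
    have "transpose_mat M $$ (i,j) = M $$ (j,i)" using ij M by simp
    thus "M $$ (j,i) = M $$ (i,j)" using s by simp
  qed
  from spectral_radius_mem_max(1)[OF C n] obtain c where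
    c: "c \<in> spectrum ?C" and nc: "spectral_radius ?C = norm c" by auto
  from c obtain v where ev: "eigenvector ?C v c" unfolding spectrum_def eigenvalue_def by auto
  hence v: "v \<in> carrier_vec n" "v \<noteq> 0\<^sub>v n" "?C *\<^sub>v v = c \<cdot>\<^sub>v v"
    unfolding eigenvector_def using C by auto
  have evi: "\<And>i. i < n \<Longrightarrow> (\<Sum>j\<in>{0..<n}. complex_of_real (M $$ (i,j)) * v $ j) = c * v $ i"
  proof -
    fix i assume i: "i < n"
    have h1: "(?C *\<^sub>v v) $ i = c * v $ i" unfolding v(3) using v i by simp
    have h2: "(?C *\<^sub>v v) $ i = (\<Sum>j\<in>{0..<n}. complex_of_real (M $$ (i,j)) * v $ j)"
      using i v(1) M by (simp add: scalar_prod_def)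
    show "(\<Sum>j\<in>{0..<n}. complex_of_real (M $$ (i,j)) * v $ j) = c * v $ i" using h1 h2 by simp
  qed
  define N where "N = (\<Sum>i\<in>{0..<n}. (cmod (v $ i))^2)"
  obtain i0 where i0: "i0 < n" "v $ i0 \<noteq> 0" using v(1,2) by (metis eq_vecI carrier_vecD index_zero_vec)
  have Npos: "N > 0" unfolding N_def
  proof (rule sum_pos2[of _ i0])
    show "0 < (cmod (v $ i0))^2" using i0 by simp
  qed (insert i0, auto)
  define s where "s = (\<Sum>i\<in>{0..<n}. \<Sum>j\<in>{0..<n}. cnj (v $ i) * complex_of_real (M $$ (i,j)) * v $ j)"
  have s1: "s = c * complex_of_real N"
  proof -
    have "s = (\<Sum>i\<in>{0..<n}. cnj (v $ i) * (\<Sum>j\<in>{0..<n}. complex_of_real (M $$ (i,j)) * v $ j))"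
      unfolding s_def by (simp add: sum_distrib_left mult.assoc)
    also have "\<dots> = (\<Sum>i\<in>{0..<n}. c * (cnj (v $ i) * v $ i))"
      by (intro sum.cong refl, simp add: evi)
    also have "\<dots> = c * complex_of_real N"
      unfolding N_def sum_distrib_left of_real_sum
      by (intro sum.cong refl) (metis complex_norm_square mult.commute)
    finally show ?thesis .
  qed
  have s2: "cnj s = s"
  proof -
    have "cnj s = (\<Sum>i\<in>{0..<n}. \<Sum>j\<in>{0..<n}. v $ i * complex_of_real (M $$ (i,j)) * cnj (v $ j))"
      unfolding s_def by simp
    also have "\<dots> = (\<Sum>j\<in>{0..<n}. \<Sum>i\<in>{0..<n}. v $ i * complex_of_real (M $$ (i,j)) * cnj (v $ j))"
      by (rule sum.swap)
    also have "\<dots> = s" unfolding s_def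
      by (intro sum.cong refl, simp add: sy ac_simps)
    finally show ?thesis .
  qed
  have Ims: "Im s = 0" using s2 by (metis cnj.simps(2) neg_equal_zero)
  have Imc: "Im c = 0" using Ims Npos unfolding s1 by simp
  define r where "r = Re c"
  have cr: "c = complex_of_real r" unfolding r_def using Imc by (simp add: complex_eq_iff)
  have "eigenvalue ?C (complex_of_real r)" using ev cr unfolding eigenvalue_def by auto
  hence "poly (char_poly ?C) (complex_of_real r) = 0" using eigenvalue_root_char_poly[OF C] by simp
  hence "complex_of_real (poly (char_poly M) r) = 0"
    unfolding of_real_hom.char_poly_hom[OF M] of_real_hom.poly_map_poly .
  hence "poly (char_poly M) r = 0" by simp
  hence "eigenvalue M r" using eigenvalue_root_char_poly[OF M] by simp
  then obtain u where eu: "eigenvector M u r" unfolding eigenvalue_def by auto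
  hence u: "u \<in> carrier_vec n" "u \<noteq> 0\<^sub>v n" "M *\<^sub>v u = r \<cdot>\<^sub>v u"
    unfolding eigenvector_def using M by auto
  obtain i1 where i1: "i1 < n" "u $ i1 \<noteq> 0" using u(1,2) by (metis eq_vecI carrier_vecD index_zero_vec)
  have upos: "sqs n (\<lambda>i. u $ i) > 0" unfolding sqs_def
  proof (rule sum_pos2[of _ i1])
    show "0 < (u $ i1)^2" using i1 by simp
  qed (insert i1, auto)
  have ueq: "\<forall>i<n. (\<Sum>j\<in>{0..<n}. M $$ (i,j) * u $ j) = r * u $ i"
  proof (intro allI impI)
    fix i assume i: "i < n"
    have h1: "(M *\<^sub>v u) $ i = r * u $ i" unfolding u(3) using u i by simp
    have h2: "(M *\<^sub>v u) $ i = (\<Sum>j\<in>{0..<n}. M $$ (i,j) * u $ j)"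
      using i u(1) M by (simp add: scalar_prod_def)
    show "(\<Sum>j\<in>{0..<n}. M $$ (i,j) * u $ j) = r * u $ i" using h1 h2 by simp
  qed
  have "\<bar>r\<bar> = spectral_radius ?C" using nc cr by simp
  thus ?thesis using upos ueq by blast
qed



definition dmat :: "nat \<Rightarrow> (nat \<Rightarrow> real) \<Rightarrow> real mat" where
  "dmat n d = mat n n (\<lambda>(i,j). if i = j then d i else 0)"

lemma dmat_carrier[simp]: "dmat n d \<in> carrier_mat n n" and dmat_dims[simp]: "dim_row (dmat n d) = n" "dim_col (dmat n d) = n"
  unfolding dmat_def by auto

lemma dmat_index[simp]: "i < n \<Longrightarrow> j < n \<Longrightarrow> dmat n d $$ (i,j) = (if i = j then d i else 0)"
  unfolding dmat_def by simp

lemma dmat_mult_left: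
  assumes A: "A \<in> carrier_mat n m" and i: "i < n" and j: "j < m"
  shows "(dmat n d * A) $$ (i,j) = d i * A $$ (i,j)"
proof -
  have "(dmat n d * A) $$ (i,j) = (\<Sum>k\<in>{0..<n}. (if i = k then d i else 0) * A $$ (k,j))"
    using A i j by (simp add: scalar_prod_def)
  also have "\<dots> = (\<Sum>k\<in>{0..<n}. if i = k then d i * A $$ (k,j) else 0)"
    by (intro sum.cong refl) auto
  also have "\<dots> = d i * A $$ (i,j)" using i by (simp add: sum.delta)
  finally show ?thesis .
qed

lemma dmat_mult_right:
  assumes A: "A \<in> carrier_mat m n" and i: "i < m" and j: "j < n"
  shows "(A * dmat n d) $$ (i,j) = A $$ (i,j) * d j"
proof -
  have "(A * dmat n d) $$ (i,j) = (\<Sum>k\<in>{0..<n}. A $$ (i,k) * (if k = j then d k else 0))"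
    using A i j by (simp add: scalar_prod_def)
  also have "\<dots> = (\<Sum>k\<in>{0..<n}. if k = j then A $$ (i,j) * d j else 0)"
    by (intro sum.cong refl) auto
  also have "\<dots> = A $$ (i,j) * d j" using j by (simp add: sum.delta')
  finally show ?thesis .
qed



lemma qf_swap:
  assumes "\<And>i j. i < n \<Longrightarrow> j < n \<Longrightarrow> M $$ (j,i) = M $$ (i,j)"
  shows "qf M n y x = qf M n x y"
proof -
  have "qf M n y x = (\<Sum>j\<in>{0..<n}. \<Sum>i\<in>{0..<n}. y i * M $$ (i,j) * x j)"
    unfolding qf_def by (rule sum.swap)
  also have "\<dots> = qf M n x y" unfolding qf_def
  proof (intro sum.cong refl)
    fix i j assume "i \<in> {0..<n}" "j \<in> {0..<n}"
    hence "M $$ (j,i) = M $$ (i,j)" using assms by auto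
    thus "y j * M $$ (j, i) * x i = x i * M $$ (i, j) * y j" by (simp only: ac_simps)
  qed
  finally show ?thesis .
qed

lemma qf_polar:
  assumes "\<And>i j. i < n \<Longrightarrow> j < n \<Longrightarrow> M $$ (j,i) = M $$ (i,j)"
  shows "qf M n (\<lambda>k. a k + b k) (\<lambda>k. a k + b k) - qf M n (\<lambda>k. a k - b k) (\<lambda>k. a k - b k) = 4 * qf M n a b"
proof -
  have "qf M n (\<lambda>k. a k + b k) (\<lambda>k. a k + b k) - qf M n (\<lambda>k. a k - b k) (\<lambda>k. a k - b k)
    = (\<Sum>i\<in>{0..<n}. \<Sum>j\<in>{0..<n}. 2 * (a i * M $$ (i,j) * b j) + 2 * (b i * M $$ (i,j) * a j))"
    unfolding qf_def sum_subtractf[symmetric] by (intro sum.cong refl, simp add: algebra_simps)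
  also have "\<dots> = 2 * qf M n a b + 2 * qf M n b a"
    unfolding qf_def sum_distrib_left sum.distrib by simp
  finally show ?thesis using qf_swap[OF assms, where y=b and x=a] by simp
qed

lemma sqs_polar: "sqs n (\<lambda>k. a k + b k) + sqs n (\<lambda>k. a k - b k) = 2 * sqs n a + 2 * sqs n b"
  unfolding sqs_def sum.distrib[symmetric] sum_distrib_left
  by (intro sum.cong refl, simp add: power2_eq_square algebra_simps)

lemma qf_ab_bound:
  assumes s: "\<And>i j. i < n \<Longrightarrow> j < n \<Longrightarrow> M $$ (j,i) = M $$ (i,j)"
    and b: "\<And>x. \<bar>qf M n x x\<bar> \<le> rho * sqs n x"
  shows "\<bar>qf M n a b\<bar> \<le> rho / 2 * (sqs n a + sqs n b)"
proof -
  have "4 * \<bar>qf M n a b\<bar> = \<bar>qf M n (\<lambda>k. a k + b k) (\<lambda>k. a k + b k) - qf M n (\<lambda>k. a k - b k) (\<lambda>k. a k - b k)\<bar>"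
    using qf_polar[OF s, where a=a and b=b] by (simp add: abs_mult)
  also have "\<dots> \<le> rho * sqs n (\<lambda>k. a k + b k) + rho * sqs n (\<lambda>k. a k - b k)"
    using b[of "\<lambda>k. a k + b k"] b[of "\<lambda>k. a k - b k"] by linarith
  also have "\<dots> = 2 * rho * (sqs n a + sqs n b)"
    unfolding distrib_left[symmetric] sqs_polar by (simp add: algebra_simps)
  finally show ?thesis by simp
qed

lemma sum_delta_r:
  assumes "finite A"
  shows "(\<Sum>b\<in>A. g b * (if b = j then 1 else 0)) = (if j \<in> A then g j else (0::real))"
proof -
  have "(\<Sum>b\<in>A. g b * (if b = j then 1 else 0)) = (\<Sum>b\<in>A. if b = j then g b else 0)"
    by (intro sum.cong) auto
  also have "\<dots> = (if j \<in> A then g j else 0)" by (rule sum.delta[OF assms])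
  finally show ?thesis .
qed

lemma qf_delta:
  assumes "i < n" "j < n"
  shows "qf M n (\<lambda>k. if k = i then 1 else 0) (\<lambda>k. if k = j then 1 else 0) = M $$ (i,j)"
proof -
  have "qf M n (\<lambda>k. if k = i then 1 else 0) (\<lambda>k. if k = j then 1 else 0)
     = (\<Sum>a\<in>{0..<n}. (\<Sum>b\<in>{0..<n}. M $$ (a,b) * (if b = j then 1 else 0)) * (if a = i then 1 else 0))"
    unfolding qf_def sum_distrib_right by (intro sum.cong refl) auto
  also have "\<dots> = M $$ (i,j)" using assms by (simp only: sum_delta_r finite_atLeastLessThan) simp
  finally show ?thesis .
qed

lemma sum_split_double:
  fixes N :: nat
  shows "(\<Sum>i\<in>{0..<N+N}. f i) = (\<Sum>i\<in>{0..<N}. f i) + (\<Sum>i\<in>{0..<N}. f (N + i))"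
proof -
  have "(\<Sum>i\<in>{0..<N+N}. f i) = (\<Sum>i\<in>{0..<N}. f i) + (\<Sum>i\<in>{N..<N+N}. f i)"
    using sum.atLeastLessThan_concat[where m=0 and n=N and p="N+N" and g=f] by simp
  also have "(\<Sum>i\<in>{N..<N+N}. f i) = (\<Sum>i\<in>{0..<N}. f (N + i))"
    using sum.shift_bounds_nat_ivl[where g=f and m=0 and n=N and k=N] by (simp add: add.commute)
  finally show ?thesis .
qed

lemma qf_vec:
  assumes "w \<in> carrier_vec n" "P \<in> carrier_mat n n"
  shows "w \<bullet> (P *\<^sub>v w) = qf P n (\<lambda>i. w $ i) (\<lambda>i. w $ i)"
  unfolding qf_def using assms by (simp add: scalar_prod_def sum_distrib_left mult.assoc)

lemma qf_four:
  assumes V: "V \<in> carrier_mat N N" and B: "B \<in> carrier_mat N N"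
  shows "qf (four_block_mat V B B V) (N+N) w w =
     qf V N w w + qf B N w (\<lambda>i. w (N+i)) + qf B N (\<lambda>i. w (N+i)) w + qf V N (\<lambda>i. w (N+i)) (\<lambda>i. w (N+i))"
proof -
  let ?P = "four_block_mat V B B V"
  have i1: "\<And>i j. i < N \<Longrightarrow> j < N \<Longrightarrow> ?P $$ (i,j) = V $$ (i,j)"
    and i2: "\<And>i j. i < N \<Longrightarrow> j < N \<Longrightarrow> ?P $$ (i,N+j) = B $$ (i,j)"
    and i3: "\<And>i j. i < N \<Longrightarrow> j < N \<Longrightarrow> ?P $$ (N+i,j) = B $$ (i,j)"
    and i4: "\<And>i j. i < N \<Longrightarrow> j < N \<Longrightarrow> ?P $$ (N+i,N+j) = V $$ (i,j)"
    using V B by (auto simp: four_block_mat_def)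
  have "qf ?P (N+N) w w =
    (\<Sum>i\<in>{0..<N}. (\<Sum>j\<in>{0..<N}. w i * ?P $$ (i,j) * w j) + (\<Sum>j\<in>{0..<N}. w i * ?P $$ (i,N+j) * w (N+j)))
    + (\<Sum>i\<in>{0..<N}. (\<Sum>j\<in>{0..<N}. w (N+i) * ?P $$ (N+i,j) * w j) + (\<Sum>j\<in>{0..<N}. w (N+i) * ?P $$ (N+i,N+j) * w (N+j)))"
    unfolding qf_def sum_split_double ..
  also have "\<dots> =
    (\<Sum>i\<in>{0..<N}. (\<Sum>j\<in>{0..<N}. w i * V $$ (i,j) * w j) + (\<Sum>j\<in>{0..<N}. w i * B $$ (i,j) * w (N+j)))
    + (\<Sum>i\<in>{0..<N}. (\<Sum>j\<in>{0..<N}. w (N+i) * B $$ (i,j) * w j) + (\<Sum>j\<in>{0..<N}. w (N+i) * V $$ (i,j) * w (N+j)))"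
    by (intro arg_cong2[where f="(+)"] sum.cong refl, auto simp: i1 i2 i3 i4)
  also have "\<dots> = qf V N w w + qf B N w (\<lambda>i. w (N+i)) + qf B N (\<lambda>i. w (N+i)) w + qf V N (\<lambda>i. w (N+i)) (\<lambda>i. w (N+i))"
    unfolding qf_def sum.distrib by simp
  finally show ?thesis .
qed



lemma qf_cong:
  assumes "\<And>i. i < n \<Longrightarrow> x i = x' i" "\<And>i. i < n \<Longrightarrow> y i = y' i"
  shows "qf M n x y = qf M n x' y'"
  unfolding qf_def using assms by (intro sum.cong refl) auto

lemma sqs_cong:
  assumes "\<And>i. i < n \<Longrightarrow> x i = x' i"
  shows "sqs n x = sqs n x'"
  unfolding sqs_def using assms by (intro sum.cong refl) auto

lemma qf_dmat: "qf (dmat n d) n x y = (\<Sum>i\<in>{0..<n}. x i * d i * y i)"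
proof -
  have "qf (dmat n d) n x y = (\<Sum>i\<in>{0..<n}. \<Sum>j\<in>{0..<n}. if j = i then x i * d i * y i else 0)"
    unfolding qf_def by (intro sum.cong refl) auto
  also have "\<dots> = (\<Sum>i\<in>{0..<n}. x i * d i * y i)" by (simp add: sum.delta)
  finally show ?thesis .
qed

lemma sqs_pos:
  assumes "i < n" "x i \<noteq> 0"
  shows "sqs n x > 0"
  unfolding sqs_def
proof (rule sum_pos2[of _ i])
  show "0 < (x i)^2" using assms by simp
qed (insert assms, auto)

lemma sqs_nonneg: "sqs n x \<ge> 0"
  unfolding sqs_def by (simp add: sum_nonneg)

lemma sqs_pos_ex:
  assumes "sqs n x > 0"
  shows "\<exists>i<n. x i \<noteq> 0"
proof (rule ccontr)
  assume "\<not> ?thesis"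
  hence "sqs n x = 0" unfolding sqs_def by simp
  thus False using assms by simp
qed



lemma abstract_main:
  fixes V H :: "real mat" and v :: "nat \<Rightarrow> real" and hbar dt :: real and N :: nat
  assumes V: "V = dmat N v" and vpos: "\<And>i. i < N \<Longrightarrow> v i > 0"
    and H: "H \<in> carrier_mat N N" and Hs: "transpose_mat H = H"
    and Hnz: "H $$ (i0,j0) \<noteq> 0" "i0 < N" "j0 < N"
    and hb: "hbar > 0" and dt: "dt > 0"
  shows "pos_def (four_block_mat V ((- (dt / (2*hbar))) \<cdot>\<^sub>m H) ((- (dt / (2*hbar))) \<cdot>\<^sub>m H) V)
    \<longleftrightarrow> dt < 2 / spectral_radius (map_mat complex_of_real ((1/hbar) \<cdot>\<^sub>m (diag_inv_sqrt V * H * diag_inv_sqrt V)))"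
proof -
  have Npos: "N > 0" using Hnz by simp
  have Hsy: "\<And>i j. i < N \<Longrightarrow> j < N \<Longrightarrow> H $$ (j,i) = H $$ (i,j)"
  proof -
    fix i j assume ij: "i < N" "j < N"
    have "transpose_mat H $$ (i,j) = H $$ (j,i)" using ij H by simp
    thus "H $$ (j,i) = H $$ (i,j)" using Hs by simp
  qed
  define sv where "sv = (\<lambda>i. 1 / sqrt (v i))"
  have svpos: "\<And>i. i < N \<Longrightarrow> sv i > 0" unfolding sv_def using vpos by simp
  have S: "diag_inv_sqrt V = dmat N sv"
    unfolding V diag_inv_sqrt_def sv_def by (rule eq_matI) auto
  define M where "M = (1/hbar) \<cdot>\<^sub>m (diag_inv_sqrt V * H * diag_inv_sqrt V)"
  have SH: "dmat N sv * H \<in> carrier_mat N N" by (rule mult_carrier_mat[OF dmat_carrier H])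
  have M: "M \<in> carrier_mat N N" unfolding M_def S using mult_carrier_mat[OF SH dmat_carrier] by simp
  have Mij: "\<And>i j. i < N \<Longrightarrow> j < N \<Longrightarrow> M $$ (i,j) = sv i * H $$ (i,j) * sv j / hbar"
  proof -
    fix i j assume ij: "i < N" "j < N"
    have "(dmat N sv * H * dmat N sv) $$ (i,j) = (dmat N sv * H) $$ (i,j) * sv j"
      by (rule dmat_mult_right[OF SH ij])
    also have "(dmat N sv * H) $$ (i,j) = sv i * H $$ (i,j)" by (rule dmat_mult_left[OF H ij])
    finally show "M $$ (i,j) = sv i * H $$ (i,j) * sv j / hbar"
      unfolding M_def S using ij H by simp
  qed
  have Msy: "\<And>i j. i < N \<Longrightarrow> j < N \<Longrightarrow> M $$ (j,i) = M $$ (i,j)"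
    using Mij Hsy by (simp add: ac_simps)
  have Ms: "transpose_mat M = M"
    by (rule eq_matI, insert M Msy, auto)
  define rho where "rho = spectral_radius (map_mat complex_of_real M)"
  have bnd: "\<And>x. \<bar>qf M N x x\<bar> \<le> rho * sqs N x"
    unfolding rho_def by (rule qf_bound[OF M Ms Npos])
  have bnd2: "\<And>a b. \<bar>qf M N a b\<bar> \<le> rho / 2 * (sqs N a + sqs N b)"
    by (rule qf_ab_bound[OF Msy bnd], auto)
  have rho0: "rho \<ge> 0" unfolding rho_def by (rule sr_nonneg[OF _ Npos], insert M, simp)
  have rhopos: "rho > 0"
  proof (rule ccontr)
    assume "\<not> rho > 0"
    hence "rho = 0" using rho0 by simp
    hence "qf M N (\<lambda>k. if k = i0 then 1 else 0) (\<lambda>k. if k = j0 then 1 else 0) = 0"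
      using bnd2[of "\<lambda>k. if k = i0 then 1 else 0" "\<lambda>k. if k = j0 then 1 else 0"] by simp
    hence "M $$ (i0,j0) = 0" using qf_delta[OF Hnz(2,3)] by simp
    hence "sv i0 * H $$ (i0,j0) * sv j0 / hbar = 0" using Mij Hnz by simp
    thus False using svpos[OF Hnz(2)] svpos[OF Hnz(3)] Hnz(1) hb by simp
  qed
  define k where "k = - (dt / (2*hbar))"
  define P where "P = four_block_mat V (k \<cdot>\<^sub>m H) (k \<cdot>\<^sub>m H) V"
  have Vc: "V \<in> carrier_mat N N" unfolding V by simp
  have Bc: "k \<cdot>\<^sub>m H \<in> carrier_mat N N" using H by simp
  have Pc: "P \<in> carrier_mat (N+N) (N+N)" unfolding P_def by (rule four_block_carrier_mat[OF Vc Vc])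
  have dimP: "dim_row P = N + N" using Pc by simp
  have qfH: "\<And>x y. qf H N x y = hbar * qf M N (\<lambda>i. x i / sv i) (\<lambda>i. y i / sv i)"
  proof -
    fix x y
    have "qf M N (\<lambda>i. x i / sv i) (\<lambda>i. y i / sv i) = qf H N x y / hbar"
      unfolding qf_def sum_divide_distrib
    proof (intro sum.cong refl)
      fix i j assume "i \<in> {0..<N}" "j \<in> {0..<N}"
      hence ij: "i < N" "j < N" by auto
      show "x i / sv i * M $$ (i, j) * (y j / sv j) = x i * H $$ (i, j) * y j / hbar"
        unfolding Mij[OF ij] using svpos[OF ij(1)] svpos[OF ij(2)] hb by (simp add: field_simps)
    qed
    thus "qf H N x y = hbar * qf M N (\<lambda>i. x i / sv i) (\<lambda>i. y i / sv i)" using hb by simp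
  qed
  have qfV: "qf V N x x = sqs N (\<lambda>i. x i / sv i)" for x
    unfolding V qf_dmat sqs_def
  proof (intro sum.cong refl)
    fix i assume "i \<in> {0..<N}"
    hence i: "i < N" by simp
    show "x i * v i * x i = (x i / sv i)^2"
      unfolding sv_def using vpos[OF i] by (simp add: power2_eq_square field_simps)
  qed
  have form: "\<And>w. w \<in> carrier_vec (N+N) \<Longrightarrow> w \<bullet> (P *\<^sub>v w) =
      sqs N (\<lambda>i. w $ i / sv i) + sqs N (\<lambda>i. w $ (N+i) / sv i)
      - dt * qf M N (\<lambda>i. w $ i / sv i) (\<lambda>i. w $ (N+i) / sv i)"
  proof -
    fix w :: "real vec" assume w: "w \<in> carrier_vec (N+N)"
    define x where "x = (\<lambda>i. w $ i)"
    have "w \<bullet> (P *\<^sub>v w) = qf P (N+N) x x" unfolding x_def by (rule qf_vec[OF w Pc])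
    also have "\<dots> = qf V N x x + qf (k \<cdot>\<^sub>m H) N x (\<lambda>i. x (N+i)) + qf (k \<cdot>\<^sub>m H) N (\<lambda>i. x (N+i)) x
        + qf V N (\<lambda>i. x (N+i)) (\<lambda>i. x (N+i))"
      unfolding P_def by (rule qf_four[OF Vc Bc])
    also have "qf (k \<cdot>\<^sub>m H) N (\<lambda>i. x (N+i)) x = qf (k \<cdot>\<^sub>m H) N x (\<lambda>i. x (N+i))"
      unfolding qf_smult[OF H] using qf_swap[OF Hsy, where y="\<lambda>i. x (N+i)" and x=x] by simp
    also have "qf (k \<cdot>\<^sub>m H) N x (\<lambda>i. x (N+i)) = k * hbar * qf M N (\<lambda>i. w $ i / sv i) (\<lambda>i. w $ (N+i) / sv i)"
      unfolding qf_smult[OF H] qfH x_def by simp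
    finally show "w \<bullet> (P *\<^sub>v w) =
      sqs N (\<lambda>i. w $ i / sv i) + sqs N (\<lambda>i. w $ (N+i) / sv i)
      - dt * qf M N (\<lambda>i. w $ i / sv i) (\<lambda>i. w $ (N+i) / sv i)"
      unfolding qfV x_def k_def using hb by (simp add: field_simps)
  qed
  have Ptr: "transpose_mat P = P"
  proof -
    have Vt: "transpose_mat V = V" unfolding V by (rule eq_matI) auto
    have Bt: "transpose_mat (k \<cdot>\<^sub>m H) = k \<cdot>\<^sub>m H"
      by (rule eq_matI, insert H Hsy, auto)
    show ?thesis unfolding P_def transpose_four_block_mat[OF Vc Bc Bc Vc] Vt Bt ..
  qed
  have "pos_def P \<longleftrightarrow> dt * rho < 2"
  proof
    assume pd: "pos_def P"
    from eig_real[OF M Ms Npos] obtain u l where u: "sqs N u > 0"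
      and l: "\<bar>l\<bar> = rho" and ul: "\<forall>i<N. (\<Sum>j\<in>{0..<N}. M $$ (i,j) * u j) = l * u i"
      unfolding rho_def by blast
    define sg where "sg = (if l \<ge> 0 then 1 else (-1::real))"
    have sgl: "sg * l = rho" unfolding sg_def using l by auto
    have sg2: "sg * sg = 1" unfolding sg_def by auto
    define w where "w = vec (N+N) (\<lambda>i. if i < N then sv i * u i else sv (i - N) * (sg * u (i - N)))"
    have wc: "w \<in> carrier_vec (N+N)" unfolding w_def by simp
    obtain i1 where i1: "i1 < N" "u i1 \<noteq> 0" using sqs_pos_ex[OF u] by auto
    have "w $ i1 \<noteq> 0" unfolding w_def using i1 svpos[OF i1(1)] by simp
    hence wnz: "w \<noteq> 0\<^sub>v (N+N)" using i1 by auto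
    have wa: "w $ i / sv i = u i" if i: "i < N" for i
      unfolding w_def using i svpos[OF i] by (simp add: field_simps)
    have wb: "w $ (N+i) / sv i = sg * u i" if i: "i < N" for i
      unfolding w_def using i svpos[OF i] by (simp add: field_simps)
    have "w \<bullet> (P *\<^sub>v w) = sqs N u + sqs N (\<lambda>i. sg * u i) - dt * qf M N u (\<lambda>i. sg * u i)"
    proof -
      have e1: "sqs N (\<lambda>i. w $ i / sv i) = sqs N u" by (rule sqs_cong, rule wa)
      have e2: "sqs N (\<lambda>i. w $ (N+i) / sv i) = sqs N (\<lambda>i. sg * u i)" by (rule sqs_cong, rule wb)
      have e3: "qf M N (\<lambda>i. w $ i / sv i) (\<lambda>i. w $ (N+i) / sv i) = qf M N u (\<lambda>i. sg * u i)"
        by (rule qf_cong, rule wa, assumption, rule wb)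
      show ?thesis unfolding form[OF wc] e1 e2 e3 ..
    qed
    also have "sqs N (\<lambda>i. sg * u i) = sqs N u"
      unfolding sqs_def by (intro sum.cong refl, simp add: power_mult_distrib power2_eq_square sg2)
    also have "qf M N u (\<lambda>i. sg * u i) = sg * qf M N u u"
      unfolding qf_def sum_distrib_left by (intro sum.cong refl, simp add: ac_simps)
    also have "qf M N u u = l * sqs N u"
      unfolding sqs_def sum_distrib_left[of l] qf_lin
    proof (intro sum.cong refl)
      fix i assume "i \<in> {0..<N}"
      hence "(\<Sum>j\<in>{0..<N}. M $$ (i,j) * u j) = l * u i" using ul by simp
      thus "u i * (\<Sum>j\<in>{0..<N}. M $$ (i,j) * u j) = l * (u i)^2" by (simp add: power2_eq_square)
    qed
    finally have "w \<bullet> (P *\<^sub>v w) = (2 - dt * (sg * l)) * sqs N u" by (simp add: algebra_simps)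
    hence "w \<bullet> (P *\<^sub>v w) = (2 - dt * rho) * sqs N u" unfolding sgl .
    moreover have "w \<bullet> (P *\<^sub>v w) > 0" using pd wc wnz unfolding pos_def_def dimP by auto
    ultimately have "(2 - dt * rho) * sqs N u > 0" by simp
    thus "dt * rho < 2" using u by (simp add: zero_less_mult_iff)
  next
    assume lt: "dt * rho < 2"
    show "pos_def P" unfolding pos_def_def dimP
    proof (intro conjI ballI impI)
      show "P \<in> carrier_mat (N+N) (N+N)" by (rule Pc)
      show "transpose_mat P = P" by (rule Ptr)
      fix w :: "real vec" assume wc: "w \<in> carrier_vec (N+N)" and wnz: "w \<noteq> 0\<^sub>v (N+N)"
      define a where "a = (\<lambda>i. w $ i / sv i)"
      define b where "b = (\<lambda>i. w $ (N+i) / sv i)"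
      obtain i where i: "i < N + N" "w $ i \<noteq> 0" using wc wnz by (metis eq_vecI carrier_vecD index_zero_vec)
      have pos: "sqs N a + sqs N b > 0"
      proof (cases "i < N")
        case True
        hence "a i \<noteq> 0" unfolding a_def using i svpos[OF True] by simp
        hence "sqs N a > 0" using True by (rule sqs_pos[rotated])
        thus ?thesis using sqs_nonneg[of N b] by simp
      next
        case False
        define i' where "i' = i - N"
        have i': "i' < N" "i = N + i'" using False i unfolding i'_def by auto
        hence "b i' \<noteq> 0" unfolding b_def using i svpos[OF i'(1)] by simp
        hence "sqs N b > 0" using i' by (intro sqs_pos[of i']) auto
        thus ?thesis using sqs_nonneg[of N a] by simp
      qed
      have "dt * qf M N a b \<le> dt * (rho / 2 * (sqs N a + sqs N b))"
        using bnd2[of a b] dt by (intro mult_left_mono) auto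
      also have "\<dots> < sqs N a + sqs N b"
      proof -
        have "dt * rho / 2 < 1" using lt by simp
        hence "(dt * rho / 2) * (sqs N a + sqs N b) < 1 * (sqs N a + sqs N b)"
          using pos by (intro mult_strict_right_mono) auto
        thus ?thesis by (simp add: ac_simps)
      qed
      finally have "0 < sqs N a + sqs N b - dt * qf M N a b" by simp
      thus "0 < w \<bullet> (P *\<^sub>v w)" unfolding form[OF wc] a_def b_def .
    qed
  qed
  also have "dt * rho < 2 \<longleftrightarrow> dt < 2 / rho" using rhopos by (simp add: field_simps)
  finally show ?thesis unfolding P_def k_def rho_def M_def .
qed



definition posd :: "nat \<Rightarrow> real mat \<Rightarrow> bool" where
  "posd n A \<longleftrightarrow> (\<exists>f. A = dmat n f \<and> (\<forall>i. f i > 0))"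

lemma kron_dmat: "kron (dmat a f) (dmat b g) = dmat (a*b) (\<lambda>i. f (i div b) * g (i mod b))"
proof (rule eq_matI)
  show "dim_row (kron (dmat a f) (dmat b g)) = dim_row (dmat (a*b) (\<lambda>i. f (i div b) * g (i mod b)))"
    "dim_col (kron (dmat a f) (dmat b g)) = dim_col (dmat (a*b) (\<lambda>i. f (i div b) * g (i mod b)))"
    unfolding kron_def by auto
  fix i j assume i: "i < dim_row (dmat (a*b) (\<lambda>i. f (i div b) * g (i mod b)))"
    and j: "j < dim_col (dmat (a*b) (\<lambda>i. f (i div b) * g (i mod b)))"
  hence ij: "i < a*b" "j < a*b" by auto
  hence b: "b > 0" by (cases b) auto
  have d: "i div b < a" "j div b < a" using ij by (auto simp: less_mult_imp_div_less mult.commute)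
  have m: "i mod b < b" "j mod b < b" using b by auto
  have eq: "i = j \<longleftrightarrow> i div b = j div b \<and> i mod b = j mod b"
    by (metis div_mult_mod_eq)
  show "kron (dmat a f) (dmat b g) $$ (i,j) = dmat (a*b) (\<lambda>i. f (i div b) * g (i mod b)) $$ (i,j)"
    unfolding kron_def using ij d m eq by auto
qed

lemma posd_kron: "posd a A \<Longrightarrow> posd b B \<Longrightarrow> posd (a*b) (kron A B)"
proof -
  assume "posd a A" "posd b B"
  then obtain f g where "A = dmat a f" "B = dmat b g" "\<forall>i. f i > 0" "\<forall>i. g i > 0"
    unfolding posd_def by auto
  thus ?thesis unfolding posd_def
    by (intro exI[of _ "\<lambda>i. f (i div b) * g (i mod b)"]) (simp add: kron_dmat)
qed

lemma smult_dmat: "c \<cdot>\<^sub>m dmat n f = dmat n (\<lambda>i. c * f i)"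
  by (rule eq_matI) auto

lemma posd_smult: "posd n A \<Longrightarrow> c > 0 \<Longrightarrow> posd n (c \<cdot>\<^sub>m A)"
  unfolding posd_def by (auto simp: smult_dmat)

lemma one_dmat: "1\<^sub>m n = dmat n (\<lambda>_. 1)"
  by (rule eq_matI) auto

lemma posd_one: "posd n (1\<^sub>m n)"
  unfolding posd_def one_dmat by auto

lemma Itilde_dmat: "Itilde p = dmat p (\<lambda>i. if i = 0 \<or> i = p - 1 then 1/2 else 1)"
  unfolding Itilde_def dmat_def by simp

lemma posd_Itilde: "posd p (Itilde p)"
  unfolding posd_def Itilde_dmat by (intro exI[of _ "\<lambda>i. if i = 0 \<or> i = p - 1 then 1/2 else 1"]) auto

lemma four_dmat: "four_block_mat (dmat a f) (0\<^sub>m a b) (0\<^sub>m b a) (dmat b g)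
   = dmat (a+b) (\<lambda>i. if i < a then f i else g (i - a))"
  by (rule eq_matI) (auto simp: four_block_mat_def)

lemma zero_dmat: "0\<^sub>m 0 0 = dmat 0 (\<lambda>_. 1)"
  by (rule eq_matI) auto

lemma posd_diag3:
  assumes "posd a A" "posd b B" "posd c C"
  shows "posd (a+b+c) (diag_block_mat [A,B,C])"
proof -
  from assms obtain f g h where A: "A = dmat a f" and B: "B = dmat b g" and C: "C = dmat c h"
    and f: "\<forall>i. f i > 0" and g: "\<forall>i. g i > 0" and h: "\<forall>i. h i > 0" unfolding posd_def by auto
  have "diag_block_mat [A,B,C] = four_block_mat (dmat a f) (0\<^sub>m a (b + (c + 0))) (0\<^sub>m (b + (c + 0)) a)
     (four_block_mat (dmat b g) (0\<^sub>m b (c + 0)) (0\<^sub>m (c + 0) b)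
       (four_block_mat (dmat c h) (0\<^sub>m c 0) (0\<^sub>m 0 c) (dmat 0 (\<lambda>_. 1))))"
    unfolding A B C by (simp add: zero_dmat[symmetric])
  also have "\<dots> = dmat (a + (b + (c + 0))) (\<lambda>i. if i < a then f i else
      (\<lambda>i. if i < b then g i else (\<lambda>i. if i < c then h i else 1) (i - b)) (i - a))"
    unfolding four_dmat ..
  finally show ?thesis unfolding posd_def using f g h by (auto simp: add.assoc)
qed

lemma posd_cong: "posd n A \<Longrightarrow> n = m \<Longrightarrow> posd m A" by simp

lemma dmat_mult: "dmat n f * dmat n g = dmat n (\<lambda>i. f i * g i)"
proof (rule eq_matI)
  fix i j assume "i < dim_row (dmat n (\<lambda>i. f i * g i))" "j < dim_col (dmat n (\<lambda>i. f i * g i))"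
  hence ij: "i < n" "j < n" by auto
  show "(dmat n f * dmat n g) $$ (i,j) = dmat n (\<lambda>i. f i * g i) $$ (i,j)"
    using dmat_mult_left[of "dmat n g" n n i j f] ij by simp
qed auto

lemma mat_inv_dmat:
  assumes "\<And>i. i < n \<Longrightarrow> f i \<noteq> 0"
  shows "mat_inv (dmat n f) = dmat n (\<lambda>i. 1 / f i)"
proof -
  let ?A = "dmat n f" and ?B = "dmat n (\<lambda>i. 1 / f i)"
  have AB: "?A * ?B = 1\<^sub>m n" unfolding dmat_mult one_dmat using assms by (intro eq_matI) auto
  have BA: "?B * ?A = 1\<^sub>m n" unfolding dmat_mult one_dmat using assms by (intro eq_matI) auto
  show ?thesis unfolding mat_inv_def
  proof (rule the_equality)
    show "?B \<in> carrier_mat (dim_row ?A) (dim_row ?A) \<and> inverts_mat ?A ?B \<and> inverts_mat ?B ?A"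
      unfolding inverts_mat_def using AB BA by simp
    fix C assume C: "C \<in> carrier_mat (dim_row ?A) (dim_row ?A) \<and> inverts_mat ?A C \<and> inverts_mat C ?A"
    hence Cc: "C \<in> carrier_mat n n" and AC: "?A * C = 1\<^sub>m n" and CA: "C * ?A = 1\<^sub>m n"
      unfolding inverts_mat_def by auto
    have "C = C * (?A * ?B)" unfolding AB using Cc by simp
    also have "\<dots> = (C * ?A) * ?B" using Cc by (simp add: assoc_mult_mat[of _ n n _ n _ n])
    also have "\<dots> = ?B" unfolding CA by simp
    finally show "C = ?B" .
  qed
qed



lemma kron_carrier: "A \<in> carrier_mat a b \<Longrightarrow> B \<in> carrier_mat c d \<Longrightarrow> kron A B \<in> carrier_mat (a*c) (b*d)"
  unfolding kron_def by auto

lemma kron_index: "i < dim_row A * dim_row B \<Longrightarrow> j < dim_col A * dim_col B \<Longrightarrow>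
  kron A B $$ (i,j) = A $$ (i div dim_row B, j div dim_col B) * B $$ (i mod dim_row B, j mod dim_col B)"
  unfolding kron_def by simp

lemma hcat_carrier: "A \<in> carrier_mat r a \<Longrightarrow> B \<in> carrier_mat r b \<Longrightarrow> hcat A B \<in> carrier_mat r (a+b)"
  unfolding hcat_def by auto

lemma hcat_index: "i < dim_row A \<Longrightarrow> j < dim_col A + dim_col B \<Longrightarrow>
  hcat A B $$ (i,j) = (if j < dim_col A then A $$ (i,j) else B $$ (i, j - dim_col A))"
  unfolding hcat_def by simp

lemma Wm_carrier: "Wm p \<in> carrier_mat p (p+1)" unfolding Wm_def by simp

lemma kron3_rows:
  assumes A: "A \<in> carrier_mat rA cA" and B: "B \<in> carrier_mat rB cB" and C: "C \<in> carrier_mat rC cC"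
    and rC: "rC \<ge> 2" and rA: "rA \<ge> 1" and rB: "rB \<ge> 1" and i: "i < 2" and j: "j < cA * (cB * cC)"
  shows "kron A (kron B C) $$ (i,j) = A $$ (0, j div (cB*cC)) * (B $$ (0, (j mod (cB*cC)) div cC) * C $$ (i, j mod cC))"
proof -
  have KBC: "kron B C \<in> carrier_mat (rB*rC) (cB*cC)" by (rule kron_carrier[OF B C])
  have r2: "rB * rC \<ge> 2" using rB rC by (metis mult_le_mono nat_mult_1)
  have ir: "i < rA * (rB * rC)" using rA r2 i by (metis less_le_trans mult_le_mono nat_mult_1 le_refl)
  have cpos: "cB * cC > 0" using j by (cases "cB * cC") auto
  have j': "j mod (cB*cC) < cB * cC" using cpos by simp
  have i1: "i div (rB*rC) = 0" "i mod (rB*rC) = i" using i r2 by auto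
  have i2: "i div rC = 0" "i mod rC = i" using i rC by auto
  have "kron A (kron B C) $$ (i,j) = A $$ (i div (rB*rC), j div (cB*cC)) * kron B C $$ (i mod (rB*rC), j mod (cB*cC))"
    using kron_index[of i A "kron B C" j] A KBC ir j by simp
  also have "kron B C $$ (i mod (rB*rC), j mod (cB*cC)) = B $$ (0, (j mod (cB*cC)) div cC) * C $$ (i, j mod cC)"
  proof -
    have "kron B C $$ (i, j mod (cB*cC)) = B $$ (i div rC, (j mod (cB*cC)) div cC) * C $$ (i mod rC, (j mod (cB*cC)) mod cC)"
      using kron_index[of i B C "j mod (cB*cC)"] B C i r2 j' by simp
    moreover have "(j mod (cB*cC)) mod cC = j mod cC" by (simp add: mod_mod_cancel)
    ultimately show ?thesis unfolding i1 i2 by simp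
  qed
  finally show ?thesis unfolding i1 by simp
qed

lemma G_entry:
  assumes D: "D \<in> carrier_mat n m" and i: "i < n" and j: "j < n"
  shows "(D * dmat m w * transpose_mat D) $$ (i,j) = (\<Sum>e\<in>{0..<m}. D $$ (i,e) * w e * D $$ (j,e))"
proof -
  have DW: "D * dmat m w \<in> carrier_mat n m" using D by simp
  have "(D * dmat m w * transpose_mat D) $$ (i,j) = (\<Sum>e\<in>{0..<m}. (D * dmat m w) $$ (i,e) * transpose_mat D $$ (e,j))"
    using DW D i j by (simp add: scalar_prod_def)
  also have "\<dots> = (\<Sum>e\<in>{0..<m}. D $$ (i,e) * w e * D $$ (j,e))"
  proof (intro sum.cong refl)
    fix e assume "e \<in> {0..<m}"
    hence e: "e < m" by simp
    have "(D * dmat m w) $$ (i,e) = D $$ (i,e) * w e" by (rule dmat_mult_right[OF D i e])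
    thus "(D * dmat m w) $$ (i,e) * transpose_mat D $$ (e,j) = D $$ (i,e) * w e * D $$ (j,e)"
      using D j e by simp
  qed
  finally show ?thesis .
qed



lemma Wt_carrier: "transpose_mat (Wm p) \<in> carrier_mat (p+1) p"
  using Wm_carrier[of p] by auto

lemma Dx_carrier: "Dx nx ny nz \<in> carrier_mat ((nz+1)*((ny+1)*(nx+1))) ((nz+1)*((ny+1)*nx))"
proof -
  have "kron (1\<^sub>m (nz+1)) (kron (1\<^sub>m (ny+1)) (transpose_mat (Wm nx))) \<in> carrier_mat ((nz+1)*((ny+1)*(nx+1))) ((nz+1)*((ny+1)*nx))"
    by (intro kron_carrier one_carrier_mat Wt_carrier)
  thus ?thesis unfolding Dx_def by simp
qed

lemma Dy_carrier: "Dy nx ny nz \<in> carrier_mat ((nz+1)*((ny+1)*(nx+1))) ((nz+1)*(ny*(nx+1)))"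
proof -
  have "kron (1\<^sub>m (nz+1)) (kron (transpose_mat (Wm ny)) (1\<^sub>m (nx+1))) \<in> carrier_mat ((nz+1)*((ny+1)*(nx+1))) ((nz+1)*(ny*(nx+1)))"
    by (intro kron_carrier one_carrier_mat Wt_carrier)
  thus ?thesis unfolding Dy_def by simp
qed

lemma Dz_carrier: "Dz nx ny nz \<in> carrier_mat ((nz+1)*((ny+1)*(nx+1))) (nz*((ny+1)*(nx+1)))"
proof -
  have "kron (transpose_mat (Wm nz)) (kron (1\<^sub>m (ny+1)) (1\<^sub>m (nx+1))) \<in> carrier_mat ((nz+1)*((ny+1)*(nx+1))) (nz*((ny+1)*(nx+1)))"
    by (intro kron_carrier one_carrier_mat Wt_carrier)
  thus ?thesis unfolding Dz_def by simp
qed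

lemma Dx_prod:
  assumes nx: "nx > 0" and e: "e < (nz+1)*((ny+1)*nx)"
  shows "Dx nx ny nz $$ (0,e) * Dx nx ny nz $$ (1,e) = (if e = 0 then -1 else 0)"
proof -
  let ?K = "kron (1\<^sub>m (nz+1)) (kron (1\<^sub>m (ny+1)) (transpose_mat (Wm nx)))"
  have Wt: "transpose_mat (Wm nx) \<in> carrier_mat (nx+1) nx" using Wm_carrier by simp
  have Kc: "?K \<in> carrier_mat ((nz+1)*((ny+1)*(nx+1))) ((nz+1)*((ny+1)*nx))"
    by (intro kron_carrier one_carrier_mat Wt)
  have r2: "(nz+1)*((ny+1)*(nx+1)) \<ge> 2" using nx
    by (metis Suc_1 Suc_le_eq le_add2 mult_le_mono nat_mult_1 add_pos_pos less_one zero_less_Suc One_nat_def add.commute plus_1_eq_Suc linorder_not_le mult_pos_pos not_less_eq_eq)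
  have Dxi: "Dx nx ny nz $$ (i,e) = - ?K $$ (i,e)" if "i < 2" for i
    unfolding Dx_def using Kc e that r2 by simp
  have Ki: "?K $$ (i,e) = 1\<^sub>m (nz+1) $$ (0, e div ((ny+1)*nx)) * (1\<^sub>m (ny+1) $$ (0, (e mod ((ny+1)*nx)) div nx) * transpose_mat (Wm nx) $$ (i, e mod nx))"
    if "i < 2" for i
    by (rule kron3_rows[OF one_carrier_mat one_carrier_mat Wt _ _ _ that e], insert nx, auto)
  have d1: "e div ((ny+1)*nx) < nz+1" using e by (simp add: less_mult_imp_div_less mult.commute)
  have d2: "(e mod ((ny+1)*nx)) div nx < ny+1" using nx
    by (metis mod_less_divisor mult_pos_pos zero_less_Suc Suc_eq_plus1 less_mult_imp_div_less mult.commute)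
  have d3: "e mod nx < nx" using nx by simp
  have W: "transpose_mat (Wm nx) $$ (i, q) = (if i = q + 1 then 1 else 0) - (if i = q then 1 else 0)"
    if "i < nx + 1" "q < nx" for i q
    using that unfolding Wm_def by simp
  show ?thesis
  proof (cases "e = 0")
    case True
    thus ?thesis using Dxi Ki nx W[of 0 0] W[of 1 0] by simp
  next
    case False
    show ?thesis
    proof (cases "e div ((ny+1)*nx) = 0 \<and> (e mod ((ny+1)*nx)) div nx = 0")
      case True
      have pos: "(ny+1)*nx > 0" using nx by simp
      have em: "e mod ((ny+1)*nx) = e"
        using div_mult_mod_eq[of e "(ny+1)*nx"] True by simp
      have "e div nx = 0" using True unfolding em by simp
      hence "e mod nx = e" using div_mult_mod_eq[of e nx] by simp
      hence "e < nx" using mod_less_divisor[OF nx, of e] by simp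
      hence "transpose_mat (Wm nx) $$ (0, e mod nx) = 0" using W[of 0 e] \<open>e < nx\<close> False by simp
      thus ?thesis using Dxi[of 0] Ki[of 0] False by simp
    next
      case False2: False
      hence "(1\<^sub>m (nz+1) :: real mat) $$ (0, e div ((ny+1)*nx)) * 1\<^sub>m (ny+1) $$ (0, (e mod ((ny+1)*nx)) div nx) = 0"
        using d1 d2 by auto
      thus ?thesis using Dxi[of 0] Ki[of 0] False by (simp add: mult.assoc[symmetric])
    qed
  qed
qed

lemma kron3_one_prod:
  assumes A: "A \<in> carrier_mat rA cA" and B: "B \<in> carrier_mat rB cB"
    and rA: "rA \<ge> 1" and rB: "rB \<ge> 1" and X: "X \<ge> 2" and j: "j < cA * (cB * X)"
  shows "kron A (kron B (1\<^sub>m X)) $$ (0,j) * kron A (kron B (1\<^sub>m X)) $$ (1,j) = (0::real)"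
proof -
  have k: "kron A (kron B (1\<^sub>m X)) $$ (i,j) = A $$ (0, j div (cB*X)) * (B $$ (0, (j mod (cB*X)) div X) * (1\<^sub>m X :: real mat) $$ (i, j mod X))"
    if "i < 2" for i
    by (rule kron3_rows[OF A B one_carrier_mat X rA rB that j])
  have l0: "(0::nat) < 2" and l1: "(1::nat) < 2" by simp_all
  have "j mod X < X" using X by simp
  hence "(1\<^sub>m X :: real mat) $$ (0, j mod X) * (1\<^sub>m X :: real mat) $$ (1, j mod X) = 0" using X by auto
  moreover have "kron A (kron B (1\<^sub>m X)) $$ (0,j) * kron A (kron B (1\<^sub>m X)) $$ (1,j) =
     (A $$ (0, j div (cB*X)) * B $$ (0, (j mod (cB*X)) div X))^2 *
     ((1\<^sub>m X :: real mat) $$ (0, j mod X) * (1\<^sub>m X :: real mat) $$ (1, j mod X))"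
    unfolding k[of 0, OF l0] k[of 1, OF l1]
    by (simp only: power2_eq_square ac_simps)
  ultimately show ?thesis by (simp only: mult_zero_right)
qed


lemma Dy_prod:
  assumes nx: "nx > 0" and e: "e < (nz+1)*(ny*(nx+1))"
  shows "Dy nx ny nz $$ (0,e) * Dy nx ny nz $$ (1,e) = 0"
proof -
  let ?K = "kron (1\<^sub>m (nz+1)) (kron (transpose_mat (Wm ny)) (1\<^sub>m (nx+1)))"
  have Kc: "?K \<in> carrier_mat ((nz+1)*((ny+1)*(nx+1))) ((nz+1)*(ny*(nx+1)))"
    by (intro kron_carrier one_carrier_mat Wt_carrier)
  have r2: "(nz+1)*((ny+1)*(nx+1)) \<ge> 2" using nx
    by (metis Suc_1 Suc_le_eq le_add2 mult_le_mono nat_mult_1 add_pos_pos less_one zero_less_Suc One_nat_def add.commute plus_1_eq_Suc linorder_not_le mult_pos_pos not_less_eq_eq)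
  have Dyi: "Dy nx ny nz $$ (i,e) = - ?K $$ (i,e)" if "i < 2" for i
    unfolding Dy_def using Kc e that r2 by simp
  have "?K $$ (0,e) * ?K $$ (1,e) = 0"
    by (rule kron3_one_prod[OF one_carrier_mat Wt_carrier _ _ _ e], insert nx, auto)
  thus ?thesis using Dyi[of 0] Dyi[of 1] by simp
qed

lemma Dz_prod:
  assumes nx: "nx > 0" and e: "e < nz*((ny+1)*(nx+1))"
  shows "Dz nx ny nz $$ (0,e) * Dz nx ny nz $$ (1,e) = 0"
proof -
  let ?K = "kron (transpose_mat (Wm nz)) (kron (1\<^sub>m (ny+1)) (1\<^sub>m (nx+1)))"
  have Kc: "?K \<in> carrier_mat ((nz+1)*((ny+1)*(nx+1))) (nz*((ny+1)*(nx+1)))"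
    by (intro kron_carrier one_carrier_mat Wt_carrier)
  have r2: "(nz+1)*((ny+1)*(nx+1)) \<ge> 2" using nx
    by (metis Suc_1 Suc_le_eq le_add2 mult_le_mono nat_mult_1 add_pos_pos less_one zero_less_Suc One_nat_def add.commute plus_1_eq_Suc linorder_not_le mult_pos_pos not_less_eq_eq)
  have Dzi: "Dz nx ny nz $$ (i,e) = - ?K $$ (i,e)" if "i < 2" for i
    unfolding Dz_def using Kc e that r2 by simp
  have "?K $$ (0,e) * ?K $$ (1,e) = 0"
    by (rule kron3_one_prod[OF Wt_carrier one_carrier_mat _ _ _ e], insert nx, auto)
  thus ?thesis using Dzi[of 0] Dzi[of 1] by simp
qed

lemma Dmat_carrier: "Dmat nx ny nz \<in> carrier_mat ((nz+1)*((ny+1)*(nx+1)))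
   ((nz+1)*((ny+1)*nx) + ((nz+1)*(ny*(nx+1)) + nz*((ny+1)*(nx+1))))"
  unfolding Dmat_def by (intro hcat_carrier Dx_carrier Dy_carrier Dz_carrier)

lemma Dmat_prod:
  assumes nx: "nx > 0" and e: "e < (nz+1)*((ny+1)*nx) + ((nz+1)*(ny*(nx+1)) + nz*((ny+1)*(nx+1)))"
  shows "Dmat nx ny nz $$ (0,e) * Dmat nx ny nz $$ (1,e) = (if e = 0 then -1 else 0)"
proof -
  let ?cx = "(nz+1)*((ny+1)*nx)" and ?cy = "(nz+1)*(ny*(nx+1))" and ?cz = "nz*((ny+1)*(nx+1))"
  have r2: "(nz+1)*((ny+1)*(nx+1)) \<ge> 2" using nx
    by (metis Suc_1 Suc_le_eq le_add2 mult_le_mono nat_mult_1 add_pos_pos less_one zero_less_Suc One_nat_def add.commute plus_1_eq_Suc linorder_not_le mult_pos_pos not_less_eq_eq)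
  note cx = Dx_carrier[of nx ny nz] and cy = Dy_carrier[of nx ny nz] and cz = Dz_carrier[of nx ny nz]
  have HC: "hcat (Dy nx ny nz) (Dz nx ny nz) \<in> carrier_mat ((nz+1)*((ny+1)*(nx+1))) (?cy + ?cz)"
    by (intro hcat_carrier cy cz)
  have Di: "Dmat nx ny nz $$ (i,e) = (if e < ?cx then Dx nx ny nz $$ (i,e) else
      if e - ?cx < ?cy then Dy nx ny nz $$ (i, e - ?cx) else Dz nx ny nz $$ (i, e - ?cx - ?cy))"
    if "i < 2" for i
  proof -
    have "Dmat nx ny nz $$ (i,e) = (if e < ?cx then Dx nx ny nz $$ (i,e) else
         hcat (Dy nx ny nz) (Dz nx ny nz) $$ (i, e - ?cx))"
      unfolding Dmat_def using hcat_index[of i "Dx nx ny nz" e "hcat (Dy nx ny nz) (Dz nx ny nz)"] cx HC that r2 e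
      by simp
    also have "hcat (Dy nx ny nz) (Dz nx ny nz) $$ (i, e - ?cx) =
       (if e - ?cx < ?cy then Dy nx ny nz $$ (i, e - ?cx) else Dz nx ny nz $$ (i, e - ?cx - ?cy))"
      if "\<not> e < ?cx"
      using hcat_index[of i "Dy nx ny nz" "e - ?cx" "Dz nx ny nz"] cy cz \<open>i < 2\<close> r2 e that by simp
    ultimately show ?thesis by auto
  qed
  show ?thesis
  proof (cases "e < ?cx")
    case True
    thus ?thesis using Di[of 0] Di[of 1] Dx_prod[OF nx True] by simp
  next
    case F1: False
    hence e0: "e \<noteq> 0" using nx by auto
    show ?thesis
    proof (cases "e - ?cx < ?cy")
      case True
      thus ?thesis using Di[of 0] Di[of 1] F1 e0 Dy_prod[OF nx True] by simp
    next
      case False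
      have "e - ?cx - ?cy < ?cz" using e F1 False by linarith
      thus ?thesis using Di[of 0] Di[of 1] F1 False e0 Dz_prod[OF nx] by simp
    qed
  qed
qed



theorem lemma1:
  fixes hbar m dx dy dz dt :: real and nx ny nz :: nat
    and U :: "nat \<Rightarrow> nat \<Rightarrow> nat \<Rightarrow> real"
  assumes "hbar > 0" "m > 0" "dx > 0" "dy > 0" "dz > 0"
    and "nx > 0" "ny > 0" "nz > 0"
    and "dt > 0"
  shows "pos_def (Pmat dt hbar m dx dy dz nx ny nz U) \<longleftrightarrow> dt < dt_CFL hbar m dx dy dz nx ny nz U"
proof -
  note hb = assms(1) and mp = assms(2) and dxp = assms(3) and dyp = assms(4) and dzp = assms(5)
    and nx = assms(6) and ny = assms(7) and nz = assms(8) and dt = assms(9)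
  define N where "N = (nx+1)*(ny+1)*(nz+1)"
  define E where "E = (nz+1)*((ny+1)*nx) + ((nz+1)*(ny*(nx+1)) + nz*((ny+1)*(nx+1)))"
  have NN: "(nz+1)*((ny+1)*(nx+1)) = N" unfolding N_def by (simp add: ac_simps)
  have N2: "N \<ge> 2"
  proof -
    have "2 * 1 * 1 \<le> (nx+1)*(ny+1)*(nz+1)" using nx by (intro mult_le_mono) auto
    thus ?thesis unfolding N_def by simp
  qed
  have Epos: "E > 0" unfolding E_def using nx by simp
  have "posd ((nz+1)*((ny+1)*(nx+1))) (DV dx dy dz nx ny nz)"
    unfolding DV_def using dxp dyp dzp
    by (intro posd_smult posd_kron posd_Itilde) auto
  hence "posd N (DV dx dy dz nx ny nz)" unfolding NN .
  then obtain fv where DV: "DV dx dy dz nx ny nz = dmat N fv" and fv: "\<forall>i. fv i > 0"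
    unfolding posd_def by auto
  have "posd ((nz+1)*((ny+1)*nx) + (nz+1)*(ny*(nx+1)) + nz*((ny+1)*(nx+1))) (DS dx dy dz nx ny nz)"
    unfolding DS_def using dxp dyp dzp
    by (intro posd_diag3 posd_smult posd_kron posd_Itilde posd_one) auto
  hence "posd E (DS dx dy dz nx ny nz)" unfolding E_def by (simp add: add.assoc)
  then obtain fs where DS: "DS dx dy dz nx ny nz = dmat E fs" and fs: "\<forall>i. fs i > 0"
    unfolding posd_def by auto
  have "posd (nx*(ny+1)*(nz+1) + (nx+1)*ny*(nz+1) + (nx+1)*(ny+1)*nz) (Dl dx dy dz nx ny nz)"
    unfolding Dl_def using dxp dyp dzp
    by (intro posd_diag3 posd_smult posd_one) auto
  moreover have "nx*(ny+1)*(nz+1) + (nx+1)*ny*(nz+1) + (nx+1)*(ny+1)*nz = E"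
    unfolding E_def by (simp add: algebra_simps)
  ultimately have "posd E (Dl dx dy dz nx ny nz)" by simp
  then obtain fl where Dl: "Dl dx dy dz nx ny nz = dmat E fl" and fl: "\<forall>i. fl i > 0"
    unfolding posd_def by auto
  have Li: "mat_inv (Dl dx dy dz nx ny nz) = dmat E (\<lambda>i. 1 / fl i)"
    unfolding Dl using fl by (intro mat_inv_dmat) (metis less_irrefl)
  define fu where "fu = (\<lambda>l. U (l mod (nx+1) + 1) ((l div (nx+1)) mod (ny+1) + 1) (l div ((nx+1)*(ny+1)) + 1))"
  have DU: "DU U nx ny nz = dmat N fu" unfolding DU_def dmat_def fu_def N_def by simp
  define D where "D = Dmat nx ny nz"
  have Dc: "D \<in> carrier_mat N E" unfolding D_def E_def NN[symmetric] by (rule Dmat_carrier)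
  define w where "w = (\<lambda>i. fs i * (1 / fl i))"
  have wpos: "w 0 > 0" unfolding w_def using fs fl by simp
  define G where "G = D * dmat E w * transpose_mat D"
  have Gc: "G \<in> carrier_mat N N" unfolding G_def
    using Dc by (intro mult_carrier_mat[of _ N E] dmat_carrier) auto
  have Gij: "\<And>i j. i < N \<Longrightarrow> j < N \<Longrightarrow> G $$ (i,j) = (\<Sum>e\<in>{0..<E}. D $$ (i,e) * w e * D $$ (j,e))"
    unfolding G_def by (rule G_entry[OF Dc])
  define c where "c = hbar^2 / (2*m)"
  define H where "H = Hmat hbar m dx dy dz nx ny nz U"
  have H: "H = c \<cdot>\<^sub>m G + dmat N (\<lambda>i. fv i * fu i)"
  proof -
    have "D * dmat E fs * dmat E (\<lambda>i. 1 / fl i) = D * (dmat E fs * dmat E (\<lambda>i. 1 / fl i))"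
      using Dc by (intro assoc_mult_mat) auto
    also have "\<dots> = D * dmat E w" unfolding dmat_mult w_def ..
    finally have e: "D * dmat E fs * dmat E (\<lambda>i. 1 / fl i) = D * dmat E w" .
    show ?thesis unfolding H_def Hmat_def D_def[symmetric] DS Li DV DU dmat_mult c_def[symmetric]
      G_def e ..
  qed
  have Hc: "H \<in> carrier_mat N N" unfolding H using Gc by simp
  have Hs: "transpose_mat H = H"
  proof (rule eq_matI)
    fix i j assume "i < dim_row H" "j < dim_col H"
    hence ij: "i < N" "j < N" using Hc by auto
    have Gs: "G $$ (j,i) = G $$ (i,j)" unfolding Gij[OF ij] Gij[OF ij(2,1)]
    proof (intro sum.cong refl)
      fix e
      show "D $$ (j,e) * w e * D $$ (i,e) = D $$ (i,e) * w e * D $$ (j,e)" by (simp only: ac_simps)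
    qed
    have "transpose_mat H $$ (i,j) = H $$ (j,i)" using ij Hc by simp
    also have "\<dots> = c * G $$ (j,i) + dmat N (\<lambda>i. fv i * fu i) $$ (j,i)" unfolding H using ij Gc by simp
    also have "\<dots> = c * G $$ (i,j) + dmat N (\<lambda>i. fv i * fu i) $$ (i,j)" unfolding Gs using ij by simp
    also have "\<dots> = H $$ (i,j)" unfolding H using ij Gc by simp
    finally show "transpose_mat H $$ (i,j) = H $$ (i,j)" .
  qed (insert Hc, auto)
  have H01: "H $$ (0,1) \<noteq> 0"
  proof -
    have "G $$ (0,1) = (\<Sum>e\<in>{0..<E}. if e = 0 then - w 0 else 0)"
    proof -
      have "G $$ (0,1) = (\<Sum>e\<in>{0..<E}. D $$ (0,e) * w e * D $$ (1,e))" using Gij N2 by simp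
      also have "\<dots> = (\<Sum>e\<in>{0..<E}. if e = 0 then - w 0 else 0)"
      proof (intro sum.cong refl)
        fix e assume "e \<in> {0..<E}"
        hence p: "D $$ (0,e) * D $$ (1,e) = (if e = 0 then -1 else 0)"
          unfolding D_def E_def by (intro Dmat_prod nx) simp
        have "D $$ (0,e) * w e * D $$ (1,e) = w e * (D $$ (0,e) * D $$ (1,e))"
          by (simp only: ac_simps)
        also have "\<dots> = w e * (if e = 0 then -1 else 0)" unfolding p ..
        also have "\<dots> = (if e = 0 then - w 0 else 0)" by simp
        finally show "D $$ (0,e) * w e * D $$ (1,e) = (if e = 0 then - w 0 else 0)" .
      qed
      finally show ?thesis .
    qed
    also have "\<dots> = - w 0" using Epos by (simp add: sum.delta)
    finally have "G $$ (0,1) = - w 0" .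
    hence "H $$ (0,1) = c * (- w 0)" unfolding H using Gc N2 by simp
    moreover have "c > 0" unfolding c_def using hb mp by simp
    ultimately show ?thesis using wpos by simp
  qed
  have main: "pos_def (four_block_mat (dmat N fv) ((- (dt / (2*hbar))) \<cdot>\<^sub>m H) ((- (dt / (2*hbar))) \<cdot>\<^sub>m H) (dmat N fv))
    \<longleftrightarrow> dt < 2 / spectral_radius (map_mat complex_of_real ((1/hbar) \<cdot>\<^sub>m (diag_inv_sqrt (dmat N fv) * H * diag_inv_sqrt (dmat N fv))))"
    by (rule abstract_main[OF refl _ Hc Hs H01 _ _ hb dt], insert fv N2, auto)
  show ?thesis unfolding Pmat_def dt_CFL_def Let_def H_def[symmetric] DV by (rule main)
qed


end
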